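(* Let $k\in\mathbb{N}$ and let $t$ be a positive integer. For every Dunkl-harmonic $H_k\in\mathcal{H}_k$ of degree $k$, the Clifford--Hermite polynomial satisfies \[ (D_+)^{2t}H_k=\phi_{2t,k}^{\mu}(|x|^2)\,H_k,\qquad \phi_{2t,k}^{\mu}(|x|^{2}) = 2^{2t}\, t!\, L_{t}^{\frac{\mu}{2} + k-1}(|x|^2), \] where $L_t^\alpha$ is the generalized Laguerre polynomial \[ L_{t}^{\alpha}(x) = \sum_{i=0}^t \frac{\Gamma(t +\alpha +1)}{i!\, (t-i)!\, \Gamma(i + \alpha +1)} (-x)^i. \]
   Context: Let $R\subset\mathbb{R}^m$ be a reduced root system normalized so that $\langle\alpha,\alpha\rangle=2$ for all $\alpha\in R$, with positive subsystem $R_+$, and let $G\subset O(m)$ be the finite reflection group generated by the reflections $r_\alpha(x)=x-2\frac{\langle\alpha,x\rangle}{|\alpha|^2}\alpha$, $\alpha\in R$. Let $\kappa:R\to\mathbb{C}$ be a $G$-invariant multiplicity function, $\kappa_\alpha=\kappa(\alpha)$. The Dunkl operators are $T_i f(x)=\partial_{x_i}f(x)+\sum_{\alpha\in R_+}\kappa_\alpha\alpha_i\frac{f(x)-f(r_\alpha x)}{\langle\alpha,x\rangle}$, $i=1,\dots,m$; they commute. The Dunkl Laplacian is $\Delta_\kappa=\sum_{i=1}^m T_i^2$. Put $\gamma=\sum_{\alpha\in R_+}\kappa_\alpha$ and $\mu=m+2\gamma$. $\mathbb{E}=\sum_{i=1}^m x_i\partial_{x_i}$ is the Euler operator. $\mathcal{P}_k$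 denotes real homogeneous polynomials of degree $k$ on $\mathbb{R}^m$ and $\mathcal{H}_k=\mathcal{P}_k\cap\ker\Delta_\kappa$. Let $\mathcal{C}l_{0,m}$ be the Clifford algebra generated by $e_1,\dots,e_m$ with $e_ie_j+e_je_i=-2\delta_{ij}$. Set $\underline{x}=\sum_i e_ix_i$, $D_\kappa=\sum_i e_iT_i$, and $D_+=-D_\kappa+2\underline{x}$. The Clifford--Hermite polynomial of degree $2t$ associated with $H_k\in\mathcal{H}_k$ is $C\!H_{2t}^{\mu}(H_k)=(D_+)^{2t}H_k$; it has the form $\phi_{2t,k}^{\mu}(|x|^2)H_k$ for a polynomial $\phi_{2t,k}^{\mu}$ in one variable depending only on $t,k,\mu$. *)

theory Defs
  imports "HOL-Analysis.Analysis"
begin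

definition refl :: "real^'n \<Rightarrow> real^'n \<Rightarrow> real^'n" where
  "refl \<alpha> x = x - (2 * (\<alpha> \<bullet> x) / (\<alpha> \<bullet> \<alpha>)) *\<^sub>R \<alpha>"

text \<open>Reduced root system (Dunkl's convention, not necessarily crystallographic),
  normalized so that every root has squared length 2.\<close>
definition normalized_root_system :: "(real^'n) set \<Rightarrow> bool" where
  "normalized_root_system R \<longleftrightarrow>
     finite R \<and> 0 \<notin> R \<and>
     (\<forall>\<alpha>\<in>R. \<forall>\<beta>\<in>R. refl \<alpha> \<beta> \<in> R) \<and>
     (\<forall>\<alpha>\<in>R. \<forall>c::real. c *\<^sub>R \<alpha> \<in> R \<longrightarrow> c = 1 \<or> c = -1) \<and>
     (\<forall>\<alpha>\<in>R. \<alpha> \<bullet> \<alpha> = 2)"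

definition positive_subsystem :: "(real^'n) set \<Rightarrow> (real^'n) set \<Rightarrow> bool" where
  "positive_subsystem R Rp \<longleftrightarrow>
     (\<exists>\<beta>. (\<forall>\<alpha>\<in>R. \<alpha> \<bullet> \<beta> \<noteq> 0) \<and> Rp = {\<alpha>\<in>R. \<alpha> \<bullet> \<beta> > 0})"

inductive_set refl_group :: "(real^'n) set \<Rightarrow> (real^'n \<Rightarrow> real^'n) set" for R where
  id_in: "id \<in> refl_group R"
| step: "g \<in> refl_group R \<Longrightarrow> \<alpha> \<in> R \<Longrightarrow> (refl \<alpha> \<circ> g) \<in> refl_group R"

definition G_invariant :: "(real^'n) set \<Rightarrow> (real^'n \<Rightarrow> complex) \<Rightarrow> bool" where
  "G_invariant R \<kappa> \<longleftrightarrow> (\<forall>g\<in>refl_group R. \<forall>\<alpha>\<in>R. \<kappa> (g \<alpha>) = \<kappa> \<alpha>)"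

definition partial :: "'n \<Rightarrow> (real^'n \<Rightarrow> complex) \<Rightarrow> real^'n \<Rightarrow> complex" where
  "partial i f x = vector_derivative (\<lambda>s::real. f (x + s *\<^sub>R axis i 1)) (at 0)"

definition dir_deriv :: "real^'n \<Rightarrow> (real^'n \<Rightarrow> complex) \<Rightarrow> real^'n \<Rightarrow> complex" where
  "dir_deriv v f x = vector_derivative (\<lambda>s::real. f (x + s *\<^sub>R v)) (at 0)"

text \<open>Difference quotient of the Dunkl operator; on the hyperplane \<open>\<langle>\<alpha>,x\<rangle> = 0\<close>
  it is given its continuous extension (the directional derivative along \<alpha>,
  using \<open>|\<alpha>|^2 = 2\<close>).\<close>
definition dquot :: "real^'n \<Rightarrow> (real^'n \<Rightarrow> complex) \<Rightarrow> real^'n \<Rightarrow> complex" where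
  "dquot \<alpha> f x = (if \<alpha> \<bullet> x = 0 then dir_deriv \<alpha> f x
                   else (f x - f (refl \<alpha> x)) / complex_of_real (\<alpha> \<bullet> x))"

definition dunkl :: "(real^'n) set \<Rightarrow> (real^'n \<Rightarrow> complex) \<Rightarrow> 'n
                     \<Rightarrow> (real^'n \<Rightarrow> complex) \<Rightarrow> real^'n \<Rightarrow> complex" where
  "dunkl Rp \<kappa> i f x = partial i f x +
     (\<Sum>\<alpha>\<in>Rp. \<kappa> \<alpha> * complex_of_real (\<alpha> $ i) * dquot \<alpha> f x)"

definition dunkl_laplacian :: "(real^'n) set \<Rightarrow> (real^'n \<Rightarrow> complex)
                     \<Rightarrow> (real^'n \<Rightarrow> complex) \<Rightarrow> real^'n \<Rightarrow> complex" where
  "dunkl_laplacian Rp \<kappa> f x = (\<Sum>i\<in>UNIV. dunkl Rp \<kappa> i (dunkl Rp \<kappa> i f) x)"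

definition hom_poly :: "nat \<Rightarrow> (real^'n \<Rightarrow> real) \<Rightarrow> bool" where
  "hom_poly k f \<longleftrightarrow> (\<exists>c :: ('n \<Rightarrow> nat) \<Rightarrow> real.
     f = (\<lambda>x. \<Sum>a\<in>{a :: 'n \<Rightarrow> nat. sum a UNIV = k}. c a * (\<Prod>i\<in>UNIV. (x $ i) ^ a i)))"

definition dunkl_harmonic :: "(real^'n) set \<Rightarrow> (real^'n \<Rightarrow> complex) \<Rightarrow> nat
                              \<Rightarrow> (real^'n \<Rightarrow> real) \<Rightarrow> bool" where
  "dunkl_harmonic Rp \<kappa> k H \<longleftrightarrow> hom_poly k H \<and>
     (\<forall>x. dunkl_laplacian Rp \<kappa> (\<lambda>y. complex_of_real (H y)) x = 0)"

text \<open>An element is a coefficient function on the basis blades \<open>e_A\<close>, \<open>A \<subseteq> 'n\<close>,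
  with \<open>e_A = e_{a1} ... e_{ak}\<close> for \<open>a1 < ... < ak\<close>.\<close>
type_synonym 'n clif = "'n set \<Rightarrow> complex"

text \<open>\<open>e_i e_A = clif_sign i A e_{A \<triangle> {i}}\<close>, using \<open>e_i e_j = - e_j e_i\<close> (i \<noteq> j), \<open>e_i^2 = -1\<close>.\<close>
definition clif_sign :: "'n::linorder \<Rightarrow> 'n set \<Rightarrow> complex" where
  "clif_sign i A = (-1) ^ card {j\<in>A. j < i} * (if i \<in> A then -1 else 1)"

definition symdiff1 :: "'n set \<Rightarrow> 'n \<Rightarrow> 'n set" where
  "symdiff1 B i = (if i \<in> B then B - {i} else insert i B)"

definition e_mult :: "'n::linorder \<Rightarrow> 'n clif \<Rightarrow> 'n clif" where
  "e_mult i u = (\<lambda>B. clif_sign i (symdiff1 B i) * u (symdiff1 B i))"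

definition scal :: "complex \<Rightarrow> 'n clif" where
  "scal c = (\<lambda>A. if A = {} then c else 0)"

definition cmult :: "complex \<Rightarrow> 'n clif \<Rightarrow> 'n clif" where
  "cmult c u = (\<lambda>A. c * u A)"

definition dunkl_clif :: "(real^'n) set \<Rightarrow> (real^'n \<Rightarrow> complex) \<Rightarrow> 'n
                  \<Rightarrow> (real^'n \<Rightarrow> 'n clif) \<Rightarrow> real^'n \<Rightarrow> 'n clif" where
  "dunkl_clif Rp \<kappa> i F x = (\<lambda>A. dunkl Rp \<kappa> i (\<lambda>y. F y A) x)"

definition dirac :: "(real^('n::{finite,linorder})) set \<Rightarrow> (real^('n::{finite,linorder}) \<Rightarrow> complex)
                  \<Rightarrow> (real^('n::{finite,linorder}) \<Rightarrow> ('n::{finite,linorder}) clif) \<Rightarrow> real^('n::{finite,linorder}) \<Rightarrow> ('n::{finite,linorder}) clif" where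
  "dirac Rp \<kappa> F x = (\<lambda>A. \<Sum>i\<in>UNIV. e_mult i (dunkl_clif Rp \<kappa> i F x) A)"

definition D_plus :: "(real^('n::{finite,linorder})) set \<Rightarrow> (real^('n::{finite,linorder}) \<Rightarrow> complex)
                  \<Rightarrow> (real^('n::{finite,linorder}) \<Rightarrow> ('n::{finite,linorder}) clif) \<Rightarrow> real^('n::{finite,linorder}) \<Rightarrow> ('n::{finite,linorder}) clif" where
  "D_plus Rp \<kappa> F x = (\<lambda>A. - dirac Rp \<kappa> F x A +
      2 * (\<Sum>i\<in>UNIV. complex_of_real (x $ i) * e_mult i (F x) A))"

text \<open>The Gamma ratio \<open>\<Gamma>(t+a+1)/\<Gamma>(i+a+1)\<close> is written as the Pochhammer symbol
  \<open>(i+a+1)_(t-i)\<close>, its polynomial continuation in \<open>a\<close>.\<close>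
definition laguerre :: "nat \<Rightarrow> complex \<Rightarrow> complex \<Rightarrow> complex" where
  "laguerre t a x = (\<Sum>i\<le>t. pochhammer (of_nat i + a + 1) (t - i)
                              / (fact i * fact (t - i)) * (- x) ^ i)"

end

theory Submission
  imports Defs "HOL-Computational_Algebra.Polynomial"
begin


inductive_set polys :: "(real^'n \<Rightarrow> complex) set" where
  Pc: "(\<lambda>x. c) \<in> polys"
| Px: "(\<lambda>x. complex_of_real (x $ j)) \<in> polys"
| Padd: "f \<in> polys \<Longrightarrow> g \<in> polys \<Longrightarrow> (\<lambda>x. f x + g x) \<in> polys"
| Pmult: "f \<in> polys \<Longrightarrow> g \<in> polys \<Longrightarrow> (\<lambda>x. f x * g x) \<in> polys"

lemma P_cmult: "f \<in> polys \<Longrightarrow> (\<lambda>x. c * f x) \<in> polys"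
  using Pmult[OF Pc] by blast

lemma P_neg: "f \<in> polys \<Longrightarrow> (\<lambda>x. - f x) \<in> polys"
  using P_cmult[of f "-1"] by simp

lemma P_diff: "f \<in> polys \<Longrightarrow> g \<in> polys \<Longrightarrow> (\<lambda>x. f x - g x) \<in> polys"
  using Padd[OF _ P_neg, of f g] by simp

lemma P_sum: "finite I \<Longrightarrow> (\<And>i. i \<in> I \<Longrightarrow> f i \<in> polys) \<Longrightarrow> (\<lambda>x. \<Sum>i\<in>I. f i x) \<in> polys"
proof (induction I rule: finite_induct)
  case empty then show ?case using Pc[of 0] by simp
next
  case (insert a I) then show ?case using Padd[of "f a" "\<lambda>x. \<Sum>i\<in>I. f i x"] by simp
qed

lemma P_prod: "finite I \<Longrightarrow> (\<And>i. i \<in> I \<Longrightarrow> f i \<in> polys) \<Longrightarrow> (\<lambda>x. \<Prod>i\<in>I. f i x) \<in> polys"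
proof (induction I rule: finite_induct)
  case empty then show ?case using Pc[of 1] by simp
next
  case (insert a I) then show ?case using Pmult[of "f a" "\<lambda>x. \<Prod>i\<in>I. f i x"] by simp
qed

lemma P_pow: "f \<in> polys \<Longrightarrow> (\<lambda>x. f x ^ n) \<in> polys"
  by (induction n) (auto intro: Pc Pmult)

lemma P_inner: "(\<lambda>x. complex_of_real (a \<bullet> x)) \<in> polys"
proof -
  have "(\<lambda>x. \<Sum>i\<in>UNIV. complex_of_real (a $ i) * complex_of_real (x $ i)) \<in> polys"
    by (rule P_sum) (auto intro: P_cmult Px)
  then show ?thesis by (simp add: inner_vec_def)
qed

lemma P_normsq: "(\<lambda>x. complex_of_real ((norm x)\<^sup>2)) \<in> polys"
  using P_inner[of _] 
proof -
  have "(\<lambda>x. \<Sum>i\<in>UNIV. complex_of_real (x $ i) * complex_of_real (x $ i)) \<in> polys"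
    by (rule P_sum) (auto intro: Pmult Px)
  then show ?thesis by (simp add: power2_norm_eq_inner inner_vec_def)
qed

lemma P_lin_comp:
  assumes "f \<in> polys" and lin: "\<And>j. (\<lambda>x. complex_of_real (L x $ j)) \<in> polys"
  shows "(\<lambda>x. f (L x)) \<in> polys"
  using assms(1)
proof (induction f rule: polys.induct)
  case (Pc c) then show ?case by (rule polys.Pc)
next
  case (Px j) then show ?case using lin by simp
next
  case (Padd f g) then show ?case using polys.Padd by blast
next
  case (Pmult f g) then show ?case using polys.Pmult by blast
qed

lemma P_refl: assumes "f \<in> polys" shows "(\<lambda>x. f (refl a x)) \<in> polys"
proof (rule P_lin_comp[OF assms])
  fix j
  have "(\<lambda>x. complex_of_real (x $ j) - complex_of_real (2 * (a $ j) / (a \<bullet> a)) * complex_of_real (a \<bullet> x)) \<in> polys"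
    by (intro P_diff P_cmult Px P_inner)
  then show "(\<lambda>x. complex_of_real (refl a x $ j)) \<in> polys"
    by (simp add: refl_def algebra_simps)
qed

lemma P_deriv_ex:
  assumes "f \<in> polys"
  shows "\<exists>d\<in>polys. \<forall>x. ((\<lambda>s. f (x + s *\<^sub>R v)) has_vector_derivative d x) (at 0)"
  using assms
proof (induction f rule: polys.induct)
  case (Pc c) then show ?case by (intro bexI[of _ "\<lambda>x. 0"]) (auto intro: polys.Pc)
next
  case (Px j)
  show ?case
  proof (intro bexI[of _ "\<lambda>x. complex_of_real (v $ j)"] allI)
    fix x :: "real^'a"
    have "((\<lambda>s. complex_of_real (x $ j + s * v $ j)) has_vector_derivative complex_of_real (v $ j)) (at 0)"
      by (rule has_vector_derivative_of_real) (auto intro!: derivative_eq_intros)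
    then show "((\<lambda>s. complex_of_real ((x + s *\<^sub>R v) $ j)) has_vector_derivative complex_of_real (v $ j)) (at 0)"
      by simp
  qed (rule polys.Pc)
next
  case (Padd f g)
  then obtain df dg where "df \<in> polys" "dg \<in> polys"
    "\<forall>x. ((\<lambda>s. f (x + s *\<^sub>R v)) has_vector_derivative df x) (at 0)"
    "\<forall>x. ((\<lambda>s. g (x + s *\<^sub>R v)) has_vector_derivative dg x) (at 0)" by blast
  then show ?case
    by (intro bexI[of _ "\<lambda>x. df x + dg x"]) (auto intro: has_vector_derivative_add polys.Padd)
next
  case (Pmult f g)
  then obtain df dg where "df \<in> polys" "dg \<in> polys"
    "\<forall>x. ((\<lambda>s. f (x + s *\<^sub>R v)) has_vector_derivative df x) (at 0)"
    "\<forall>x. ((\<lambda>s. g (x + s *\<^sub>R v)) has_vector_derivative dg x) (at 0)" by blast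
  moreover have "(\<lambda>x. f x * dg x + df x * g x) \<in> polys"
    using Pmult \<open>df \<in> polys\<close> \<open>dg \<in> polys\<close> by (auto intro: polys.Padd polys.Pmult)
  ultimately show ?case
  proof (intro bexI[of _ "\<lambda>x. f x * dg x + df x * g x"] allI)
    fix x
    show "((\<lambda>s. f (x + s *\<^sub>R v) * g (x + s *\<^sub>R v)) has_vector_derivative f x * dg x + df x * g x) (at 0)"
      using has_vector_derivative_mult[OF spec[OF \<open>\<forall>x. ((\<lambda>s. f (x + s *\<^sub>R v)) has_vector_derivative df x) (at 0)\<close>, of x]
            spec[OF \<open>\<forall>x. ((\<lambda>s. g (x + s *\<^sub>R v)) has_vector_derivative dg x) (at 0)\<close>, of x]]
      by simp
  qed
qed

lemma dd_hvd:
  assumes "f \<in> polys"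
  shows "((\<lambda>s. f (x + s *\<^sub>R v)) has_vector_derivative dir_deriv v f x) (at 0)"
proof -
  obtain d where "\<forall>x. ((\<lambda>s. f (x + s *\<^sub>R v)) has_vector_derivative d x) (at 0)"
    using P_deriv_ex[OF assms] by blast
  then show ?thesis unfolding dir_deriv_def using vector_derivative_at by metis
qed

lemma dd_P: assumes "f \<in> polys" shows "(\<lambda>x. dir_deriv v f x) \<in> polys"
proof -
  obtain d where d: "d \<in> polys" "\<forall>x. ((\<lambda>s. f (x + s *\<^sub>R v)) has_vector_derivative d x) (at 0)"
    using P_deriv_ex[OF assms] by blast
  then have "(\<lambda>x. dir_deriv v f x) = d" unfolding dir_deriv_def using vector_derivative_at by fastforce
  then show ?thesis using d by simp
qed

lemma dd_eqI: "((\<lambda>s. f (x + s *\<^sub>R v)) has_vector_derivative d) (at 0) \<Longrightarrow> dir_deriv v f x = d"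
  unfolding dir_deriv_def by (rule vector_derivative_at)

lemma dd_const[simp]: "dir_deriv v (\<lambda>x. c) x = 0"
  by (rule dd_eqI) simp

lemma dd_coord: "dir_deriv v (\<lambda>x. complex_of_real (x $ j)) x = complex_of_real (v $ j)"
proof (rule dd_eqI)
  have "((\<lambda>s. complex_of_real (x $ j + s * v $ j)) has_vector_derivative complex_of_real (v $ j)) (at 0)"
    by (rule has_vector_derivative_of_real) (auto intro!: derivative_eq_intros)
  then show "((\<lambda>s. complex_of_real ((x + s *\<^sub>R v) $ j)) has_vector_derivative complex_of_real (v $ j)) (at 0)"
    by simp
qed

lemma dd_add: "f \<in> polys \<Longrightarrow> g \<in> polys \<Longrightarrow>
   dir_deriv v (\<lambda>x. f x + g x) x = dir_deriv v f x + dir_deriv v g x"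
  by (rule dd_eqI) (auto intro: has_vector_derivative_add dd_hvd)

lemma dd_mult: "f \<in> polys \<Longrightarrow> g \<in> polys \<Longrightarrow>
   dir_deriv v (\<lambda>x. f x * g x) x = dir_deriv v f x * g x + f x * dir_deriv v g x"
  apply (rule dd_eqI)
  using has_vector_derivative_mult[OF dd_hvd[where f=f and x=x and v=v] dd_hvd[where f=g and x=x and v=v]]
  by (simp add: algebra_simps)

lemma dd_cmult: "f \<in> polys \<Longrightarrow> dir_deriv v (\<lambda>x. c * f x) x = c * dir_deriv v f x"
  by (simp add: dd_mult Pc)

lemma dd_neg: "f \<in> polys \<Longrightarrow> dir_deriv v (\<lambda>x. - f x) x = - dir_deriv v f x"
  using dd_cmult[where f=f and v=v and x=x and c="-1"] by simp

lemma dd_diff: "f \<in> polys \<Longrightarrow> g \<in> polys \<Longrightarrow>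
   dir_deriv v (\<lambda>x. f x - g x) x = dir_deriv v f x - dir_deriv v g x"
  using dd_add[where f=f and g="\<lambda>x. - g x" and v=v and x=x] dd_neg[where f=g and v=v and x=x] P_neg[of g] by simp

lemma dd_sum: "finite I \<Longrightarrow> (\<And>i. i \<in> I \<Longrightarrow> f i \<in> polys) \<Longrightarrow>
   dir_deriv v (\<lambda>x. \<Sum>i\<in>I. f i x) x = (\<Sum>i\<in>I. dir_deriv v (f i) x)"
  by (rule dd_eqI) (auto intro!: has_vector_derivative_sum dd_hvd)

lemma dd_vadd: "f \<in> polys \<Longrightarrow> dir_deriv (v + w) f x = dir_deriv v f x + dir_deriv w f x"
proof (induction f rule: polys.induct)
  case (Px j) then show ?case by (simp add: dd_coord)
next
  case (Padd f g) then show ?case by (simp add: dd_add)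
next
  case (Pmult f g) then show ?case by (simp add: dd_mult algebra_simps)
qed simp

lemma dd_vscale: "f \<in> polys \<Longrightarrow> dir_deriv (c *\<^sub>R v) f x = complex_of_real c * dir_deriv v f x"
proof (induction f rule: polys.induct)
  case (Px j) then show ?case by (simp add: dd_coord)
next
  case (Padd f g) then show ?case by (simp add: dd_add algebra_simps)
next
  case (Pmult f g) then show ?case by (simp add: dd_mult algebra_simps)
qed simp

lemma dd_vneg: "f \<in> polys \<Longrightarrow> dir_deriv (- v) f x = - dir_deriv v f x"
  using dd_vscale[where f=f and c="-1" and v=v and x=x] by simp

lemma dd_vdiff: "f \<in> polys \<Longrightarrow> dir_deriv (v - w) f x = dir_deriv v f x - dir_deriv w f x"
  using dd_vadd[where f=f and v=v and w="-w" and x=x] dd_vneg[where f=f and v=w and x=x] by simp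

lemma dd_comp_lin:
  assumes "linear L"
  shows "dir_deriv v (\<lambda>y. f (L y)) x = dir_deriv (L v) f (L x)"
  unfolding dir_deriv_def using assms by (simp add: linear_add linear_scale)


lemma refl_linear: "linear (refl a)"
proof (rule linearI)
  fix x y
  have "2 * (a \<bullet> (x + y)) / (a \<bullet> a) = 2 * (a \<bullet> x) / (a \<bullet> a) + 2 * (a \<bullet> y) / (a \<bullet> a)"
    by (simp add: inner_add_right add_divide_distrib distrib_left)
  then show "refl a (x + y) = refl a x + refl a y"
    unfolding refl_def by (simp add: scaleR_add_left)
next
  fix c :: real and x
  have "2 * (a \<bullet> (c *\<^sub>R x)) / (a \<bullet> a) = c * (2 * (a \<bullet> x) / (a \<bullet> a))"
    by simp
  then show "refl a (c *\<^sub>R x) = c *\<^sub>R refl a x"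
    unfolding refl_def by (simp add: scaleR_diff_right)
qed

lemma refl_add: "refl a (x + y) = refl a x + refl a y"
  using refl_linear linear_add by blast

lemma refl_scale: "refl a (c *\<^sub>R x) = c *\<^sub>R refl a x"
  using refl_linear linear_scale by blast

lemma refl_neg_arg: "refl a (- x) = - refl a x"
  using refl_linear linear_neg by blast

lemma refl_diff: "refl a (x - y) = refl a x - refl a y"
  using refl_linear linear_diff by blast

lemma refl_inner_left: "a \<bullet> a \<noteq> 0 \<Longrightarrow> a \<bullet> refl a x = - (a \<bullet> x)"
  unfolding refl_def by (simp add: inner_diff_right algebra_simps)

lemma refl_refl: "a \<bullet> a \<noteq> 0 \<Longrightarrow> refl a (refl a x) = x"
  unfolding refl_def by (simp add: inner_diff_right algebra_simps)

lemma refl_sym: "refl a x \<bullet> y = x \<bullet> refl a y"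
  unfolding refl_def by (simp add: inner_diff_right inner_diff_left algebra_simps inner_commute)

lemma refl_inner: "a \<bullet> a \<noteq> 0 \<Longrightarrow> refl a x \<bullet> refl a y = x \<bullet> y"
  by (simp add: refl_sym refl_refl)

lemma refl_self: "a \<bullet> a \<noteq> 0 \<Longrightarrow> refl a a = - a"
  unfolding refl_def by (simp add: scaleR_2)

lemma refl_fix: "a \<bullet> x = 0 \<Longrightarrow> refl a x = x"
  unfolding refl_def by simp

lemma refl_uminus: "refl (- a) = refl a"
  unfolding refl_def by (auto simp: fun_eq_iff)

lemma refl_conj:
  assumes "b \<bullet> b \<noteq> 0"
  shows "refl b (refl a x) = refl (refl b a) (refl b x)"
proof -
  have "refl (refl b a) (refl b x) = refl b x - (2 * (refl b a \<bullet> refl b x) / (refl b a \<bullet> refl b a)) *\<^sub>R refl b a"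
    unfolding refl_def[of "refl b a"] ..
  also have "\<dots> = refl b x - (2 * (a \<bullet> x) / (a \<bullet> a)) *\<^sub>R refl b a"
    using assms by (simp add: refl_inner)
  also have "\<dots> = refl b (refl a x)"
    by (simp add: refl_def[of a] refl_diff refl_scale)
  finally show ?thesis by simp
qed

lemma refl2: "a \<bullet> a = 2 \<Longrightarrow> refl a x = x - (a \<bullet> x) *\<^sub>R a"
  unfolding refl_def by simp

definition nsq :: "real^'n \<Rightarrow> complex" where "nsq x = complex_of_real ((norm x)\<^sup>2)"

lemma P_nsq: "nsq \<in> polys"
  using P_normsq unfolding nsq_def[abs_def] .

lemma nsq_refl: "a \<bullet> a \<noteq> 0 \<Longrightarrow> nsq (refl a x) = nsq x"
  unfolding nsq_def using refl_inner[of a x x] by (simp add: norm_eq_sqrt_inner)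


lemma dquot_const[simp]: "dquot a (\<lambda>x. c) x = 0"
  unfolding dquot_def by simp

lemma dquot_coord: "a \<bullet> a = 2 \<Longrightarrow> dquot a (\<lambda>x. complex_of_real (x $ j)) x = complex_of_real (a $ j)"
  unfolding dquot_def by (auto simp: dd_coord refl2 field_simps)

lemma dquot_add: "f \<in> polys \<Longrightarrow> g \<in> polys \<Longrightarrow> dquot a (\<lambda>x. f x + g x) x = dquot a f x + dquot a g x"
  unfolding dquot_def by (auto simp: dd_add field_simps)

lemma dquot_mult:
  assumes "f \<in> polys" "g \<in> polys"
  shows "dquot a (\<lambda>x. f x * g x) x = dquot a f x * g x + f (refl a x) * dquot a g x"
proof (cases "a \<bullet> x = 0")
  case True then show ?thesis unfolding dquot_def using assms by (simp add: dd_mult refl_fix)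
next
  case False then show ?thesis unfolding dquot_def by (simp add: field_simps)
qed

lemma dquot_cmult: "f \<in> polys \<Longrightarrow> dquot a (\<lambda>x. c * f x) x = c * dquot a f x"
  by (simp add: dquot_mult Pc)

lemma dquot_neg: "f \<in> polys \<Longrightarrow> dquot a (\<lambda>x. - f x) x = - dquot a f x"
  using dquot_cmult[where f=f and c="-1"] by simp

lemma dquot_diff: "f \<in> polys \<Longrightarrow> g \<in> polys \<Longrightarrow> dquot a (\<lambda>x. f x - g x) x = dquot a f x - dquot a g x"
  using dquot_add[where f=f and g="\<lambda>x. - g x"] dquot_neg[where f=g] P_neg[of g] by simp

lemma dquot_sum: "finite I \<Longrightarrow> (\<And>i. i \<in> I \<Longrightarrow> f i \<in> polys) \<Longrightarrow>
   dquot a (\<lambda>x. \<Sum>i\<in>I. f i x) x = (\<Sum>i\<in>I. dquot a (f i) x)"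
proof (induction I rule: finite_induct)
  case empty then show ?case by simp
next
  case (insert b I)
  then show ?case by (simp add: dquot_add P_sum)
qed

lemma dquot_P: assumes "f \<in> polys" "a \<bullet> a = 2" shows "(\<lambda>x. dquot a f x) \<in> polys"
  using assms(1)
proof (induction f rule: polys.induct)
  case (Pc c) then show ?case by (simp add: polys.Pc)
next
  case (Px j) then show ?case using assms(2) by (simp add: dquot_coord polys.Pc)
next
  case (Padd f g) then show ?case by (simp add: dquot_add polys.Padd)
next
  case (Pmult f g) then show ?case
    by (simp add: dquot_mult) (intro polys.Padd polys.Pmult P_refl; assumption)
qed

lemma dquot_uminus: "f \<in> polys \<Longrightarrow> dquot (- a) f x = - dquot a f x"
  unfolding dquot_def by (auto simp: refl_uminus dd_vneg field_simps)

lemma dquot_comp: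
  assumes "b \<bullet> b \<noteq> 0"
  shows "dquot c (\<lambda>y. f (refl b y)) x = dquot (refl b c) f (refl b x)"
proof -
  have i: "refl b c \<bullet> refl b x = c \<bullet> x" using assms by (rule refl_inner)
  show ?thesis
  proof (cases "c \<bullet> x = 0")
    case True then show ?thesis unfolding dquot_def using i
      by (simp add: dd_comp_lin[OF refl_linear])
  next
    case False then show ?thesis unfolding dquot_def using i refl_conj[OF assms] by simp
  qed
qed

lemma hrd_sq: "((\<lambda>s. (x + s *\<^sub>R v) \<bullet> (x + s *\<^sub>R v)) has_real_derivative 2 * (v \<bullet> x)) (at 0)"
proof -
  have "(\<lambda>s. (x + s *\<^sub>R v) \<bullet> (x + s *\<^sub>R v)) = (\<lambda>s. x \<bullet> x + s * (2 * (v \<bullet> x)) + s^2 * (v \<bullet> v))"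
    by (auto simp: fun_eq_iff inner_add_left inner_add_right inner_commute power2_eq_square algebra_simps)
  moreover have "((\<lambda>s. x \<bullet> x + s * (2 * (v \<bullet> x)) + s^2 * (v \<bullet> v)) has_real_derivative 2 * (v \<bullet> x)) (at 0)"
    by (auto intro!: derivative_eq_intros)
  ultimately show ?thesis by simp
qed

lemma dquot_normsq0: "a \<bullet> a \<noteq> 0 \<Longrightarrow> dquot a (\<lambda>x. complex_of_real ((norm x)\<^sup>2)) x = 0"
proof -
  assume a: "a \<bullet> a \<noteq> 0"
  have "norm (refl a x) = norm x" using refl_inner[OF a, of x x] by (simp add: norm_eq_sqrt_inner)
  moreover have "dir_deriv a (\<lambda>x. complex_of_real ((norm x)\<^sup>2)) x = complex_of_real (2 * (a \<bullet> x))"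
  proof (rule dd_eqI)
    have "((\<lambda>s. (x + s *\<^sub>R a) \<bullet> (x + s *\<^sub>R a)) has_real_derivative 2 * (a \<bullet> x)) (at 0)"
      by (rule hrd_sq)
    then have "((\<lambda>s. complex_of_real ((x + s *\<^sub>R a) \<bullet> (x + s *\<^sub>R a))) has_vector_derivative complex_of_real (2 * (a \<bullet> x))) (at 0)"
      by (rule has_vector_derivative_of_real)
    then show "((\<lambda>s. complex_of_real ((norm (x + s *\<^sub>R a))\<^sup>2)) has_vector_derivative complex_of_real (2 * (a \<bullet> x))) (at 0)"
      by (simp add: power2_norm_eq_inner)
  qed
  ultimately show ?thesis unfolding dquot_def by auto
qed

lemma dd_normsq0: "dir_deriv v (\<lambda>x. complex_of_real ((norm x)\<^sup>2)) x = complex_of_real (2 * (v \<bullet> x))"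
proof (rule dd_eqI)
  have "((\<lambda>s. (x + s *\<^sub>R v) \<bullet> (x + s *\<^sub>R v)) has_real_derivative 2 * (v \<bullet> x)) (at 0)"
    by (rule hrd_sq)
  then have "((\<lambda>s. complex_of_real ((x + s *\<^sub>R v) \<bullet> (x + s *\<^sub>R v))) has_vector_derivative complex_of_real (2 * (v \<bullet> x))) (at 0)"
    by (rule has_vector_derivative_of_real)
  then show "((\<lambda>s. complex_of_real ((norm (x + s *\<^sub>R v))\<^sup>2)) has_vector_derivative complex_of_real (2 * (v \<bullet> x))) (at 0)"
    by (simp add: power2_norm_eq_inner)
qed

lemma dquot_nsq: "a \<bullet> a \<noteq> 0 \<Longrightarrow> dquot a nsq x = 0"
  using dquot_normsq0[of a x] unfolding nsq_def[abs_def] .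

lemma dd_nsq: "dir_deriv v nsq x = complex_of_real (2 * (v \<bullet> x))"
  using dd_normsq0[of v x] unfolding nsq_def[abs_def] .


locale dsetup =
  fixes R Rp :: "(real^('n::{finite,linorder})) set" and \<kappa> :: "real^('n::{finite,linorder}) \<Rightarrow> complex"
  assumes nrs: "normalized_root_system R" and pos: "positive_subsystem R Rp" and ginv: "G_invariant R \<kappa>"
begin

lemma finR: "finite R" using nrs unfolding normalized_root_system_def by blast
lemma R_norm: "a \<in> R \<Longrightarrow> a \<bullet> a = 2" using nrs unfolding normalized_root_system_def by blast
lemma R_nz: "a \<in> R \<Longrightarrow> a \<bullet> a \<noteq> 0" using R_norm by simp
lemma R_ne0: "a \<in> R \<Longrightarrow> a \<noteq> 0" using R_nz by auto
lemma R_refl: "a \<in> R \<Longrightarrow> b \<in> R \<Longrightarrow> refl a b \<in> R" using nrs unfolding normalized_root_system_def by blast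
lemma R_neg: "a \<in> R \<Longrightarrow> - a \<in> R" using R_refl[of a a] refl_self[OF R_nz] by simp

lemma kappa_refl: "a \<in> R \<Longrightarrow> b \<in> R \<Longrightarrow> \<kappa> (refl a b) = \<kappa> b"
proof -
  assume "a \<in> R" "b \<in> R"
  then have "refl a \<circ> id \<in> refl_group R" by (intro refl_group.step refl_group.id_in)
  then show ?thesis using ginv \<open>b \<in> R\<close> unfolding G_invariant_def by force
qed

lemma kappa_neg: "a \<in> R \<Longrightarrow> \<kappa> (- a) = \<kappa> a"
  using kappa_refl[of a a] refl_self[OF R_nz] by simp


lemma pos_char: obtains b0 where "\<forall>a\<in>R. a \<bullet> b0 \<noteq> 0" "Rp = {a\<in>R. a \<bullet> b0 > 0}"
  using pos unfolding positive_subsystem_def by blast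

lemma Rp_sub: "Rp \<subseteq> R" by (rule pos_char) auto
lemma finRp: "finite Rp" using Rp_sub finR finite_subset by blast

lemma R_decomp: "R = Rp \<union> uminus ` Rp" "Rp \<inter> uminus ` Rp = {}"
proof -
  obtain b0 where b: "\<forall>a\<in>R. a \<bullet> b0 \<noteq> 0" "Rp = {a\<in>R. a \<bullet> b0 > 0}" by (rule pos_char)
  show "R = Rp \<union> uminus ` Rp"
  proof
    show "R \<subseteq> Rp \<union> uminus ` Rp"
    proof
      fix a assume "a \<in> R"
      show "a \<in> Rp \<union> uminus ` Rp"
      proof (cases "a \<bullet> b0 > 0")
        case True then show ?thesis using b \<open>a \<in> R\<close> by auto
      next
        case False
        then have "(- a) \<bullet> b0 > 0" using b \<open>a \<in> R\<close> by (auto simp: inner_minus_left)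
        then have "- a \<in> Rp" using b R_neg[OF \<open>a \<in> R\<close>] by auto
        then show ?thesis by (auto intro: image_eqI[of _ _ "- a"])
      qed
    qed
    have "Rp \<subseteq> R" using b by auto
    then show "Rp \<union> uminus ` Rp \<subseteq> R" using R_neg by blast
  qed
  show "Rp \<inter> uminus ` Rp = {}"
  proof (rule equals0I)
    fix a assume "a \<in> Rp \<inter> uminus ` Rp"
    then obtain c where "a \<in> Rp" "c \<in> Rp" "a = - c" by blast
    then have "a \<bullet> b0 > 0" "c \<bullet> b0 > 0" using b by auto
    then show False using \<open>a = - c\<close> by (simp add: inner_minus_left)
  qed
qed

lemma sum_R_Rp:
  fixes h :: "_ \<Rightarrow> complex"
  assumes h: "\<And>b. b \<in> R \<Longrightarrow> h (- b) = h b"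
  shows "(\<Sum>b\<in>R. h b) = 2 * (\<Sum>b\<in>Rp. h b)"
proof -
  have fin2: "finite (uminus ` Rp)" by (rule finite_imageI[OF finRp])
  have inj: "inj_on uminus Rp" by (rule inj_onI) (metis minus_minus)
  have "(\<Sum>b\<in>R. h b) = (\<Sum>b\<in>Rp \<union> uminus ` Rp. h b)" by (subst R_decomp(1)) (rule refl)
  also have "\<dots> = (\<Sum>b\<in>Rp. h b) + (\<Sum>b\<in>uminus ` Rp. h b)"
    by (rule sum.union_disjoint[OF finRp fin2 R_decomp(2)])
  also have "(\<Sum>b\<in>uminus ` Rp. h b) = (\<Sum>b\<in>Rp. h (- b))"
    using sum.reindex[OF inj, of h] unfolding comp_def .
  also have "\<dots> = (\<Sum>b\<in>Rp. h b)"
  proof (rule sum.cong[OF refl])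
    fix b assume "b \<in> Rp" then have "b \<in> R" using Rp_sub by blast
    then show "h (- b) = h b" by (rule h)
  qed
  finally show ?thesis by (simp only: mult_2)
qed

lemma sum_R_reindex:
  assumes "a \<in> R"
  shows "(\<Sum>b\<in>R. g (refl a b)) = (\<Sum>b\<in>R. g b)"
proof -
  have "bij_betw (refl a) R R"
  proof (rule bij_betw_byWitness[where f'="refl a"])
    show "\<forall>b\<in>R. refl a (refl a b) = b" using refl_refl[OF R_nz[OF assms]] by blast
    show "\<forall>b\<in>R. refl a (refl a b) = b" using refl_refl[OF R_nz[OF assms]] by blast
    show "refl a ` R \<subseteq> R" using R_refl[OF assms] by blast
    show "refl a ` R \<subseteq> R" using R_refl[OF assms] by blast
  qed
  then show ?thesis by (rule sum.reindex_bij_betw)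
qed

definition tv where
  "tv v f x = dir_deriv v f x + (\<Sum>b\<in>Rp. \<kappa> b * complex_of_real (b \<bullet> v) * dquot b f x)"

lemma dunkl_tv: "dunkl Rp \<kappa> i f x = tv (axis i 1) f x"
  unfolding dunkl_def tv_def partial_def dir_deriv_def by (simp add: inner_axis)

lemma dunkl_tv_fun: "dunkl Rp \<kappa> i f = tv (axis i 1) f"
  by (rule ext, rule dunkl_tv)

lemma tv_P: "f \<in> polys \<Longrightarrow> (\<lambda>x. tv v f x) \<in> polys"
  unfolding tv_def
  apply (rule Padd)
   apply (erule dd_P)
  apply (rule P_sum[OF finRp])
  apply (rule P_cmult)
  apply (erule dquot_P)
  using Rp_sub R_norm by blast

lemma tv_const[simp]: "tv v (\<lambda>x. c) x = 0"
  unfolding tv_def by simp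

lemma tv_add: "f \<in> polys \<Longrightarrow> g \<in> polys \<Longrightarrow> tv v (\<lambda>x. f x + g x) x = tv v f x + tv v g x"
  unfolding tv_def by (simp add: dd_add dquot_add sum.distrib algebra_simps)

lemma tv_cmult: "f \<in> polys \<Longrightarrow> tv v (\<lambda>x. c * f x) x = c * tv v f x"
  unfolding tv_def by (simp add: dd_cmult dquot_cmult sum_distrib_left algebra_simps)

lemma tv_neg: "f \<in> polys \<Longrightarrow> tv v (\<lambda>x. - f x) x = - tv v f x"
  using tv_cmult[where f=f and c="-1"] by simp

lemma tv_diff: "f \<in> polys \<Longrightarrow> g \<in> polys \<Longrightarrow> tv v (\<lambda>x. f x - g x) x = tv v f x - tv v g x"
  using tv_add[where f=f and g="\<lambda>x. - g x"] tv_neg[where f=g] P_neg[of g] by simp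

lemma tv_sum: "finite I \<Longrightarrow> (\<And>i. i \<in> I \<Longrightarrow> f i \<in> polys) \<Longrightarrow>
   tv v (\<lambda>x. \<Sum>i\<in>I. f i x) x = (\<Sum>i\<in>I. tv v (f i) x)"
proof (induction I rule: finite_induct)
  case empty then show ?case by simp
next
  case (insert b I)
  then show ?case by (simp add: tv_add P_sum)
qed

lemma tv_vadd: "f \<in> polys \<Longrightarrow> tv (v + w) f x = tv v f x + tv w f x"
  unfolding tv_def by (simp add: dd_vadd inner_add_right sum.distrib algebra_simps)

lemma tv_vscale: "f \<in> polys \<Longrightarrow> tv (c *\<^sub>R v) f x = complex_of_real c * tv v f x"
  unfolding tv_def by (simp add: dd_vscale sum_distrib_left algebra_simps)

lemma tv_vdiff: "f \<in> polys \<Longrightarrow> tv (v - w) f x = tv v f x - tv w f x"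
  unfolding tv_def by (simp add: dd_vdiff inner_diff_right sum_subtractf algebra_simps)

lemma inner_dquot: "a \<bullet> a = 2 \<Longrightarrow> complex_of_real (a \<bullet> x) * dquot a f x = f x - f (refl a x)"
  unfolding dquot_def by (auto simp: refl_fix)

lemma tv_coordmul:
  assumes f: "f \<in> polys"
  shows "tv v (\<lambda>y. complex_of_real (y $ l) * f y) x
       = complex_of_real (x $ l) * tv v f x + complex_of_real (v $ l) * f x
         + (\<Sum>b\<in>Rp. \<kappa> b * complex_of_real (b \<bullet> v) * complex_of_real (b $ l) * f (refl b x))"
proof -
  have e: "(\<lambda>y. complex_of_real (y $ l) * f y) = (\<lambda>y. f y * complex_of_real (y $ l))"
    by (simp add: mult.commute)
  have dq: "dquot b (\<lambda>y. f y * complex_of_real (y $ l)) x = dquot b f x * complex_of_real (x $ l) + f (refl b x) * complex_of_real (b $ l)"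
    if "b \<in> Rp" for b
    using that Rp_sub R_norm f by (simp add: dquot_mult Px dquot_coord subset_iff)
  have s: "(\<Sum>b\<in>Rp. \<kappa> b * complex_of_real (b \<bullet> v) * dquot b (\<lambda>y. f y * complex_of_real (y $ l)) x)
      = complex_of_real (x $ l) * (\<Sum>b\<in>Rp. \<kappa> b * complex_of_real (b \<bullet> v) * dquot b f x)
        + (\<Sum>b\<in>Rp. \<kappa> b * complex_of_real (b \<bullet> v) * complex_of_real (b $ l) * f (refl b x))"
    apply (subst sum_distrib_left, subst sum.distrib[symmetric])
    apply (rule sum.cong, simp)
    apply (simp only: dq)
    apply (simp add: algebra_simps)
    done
  have d: "dir_deriv v (\<lambda>y. f y * complex_of_real (y $ l)) x = dir_deriv v f x * complex_of_real (x $ l) + f x * complex_of_real (v $ l)"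
    using f by (simp add: dd_mult Px dd_coord)
  show ?thesis
    unfolding e tv_def s d by (simp add: algebra_simps)
qed

lemma tv_normsqmul:
  assumes f: "f \<in> polys"
  shows "tv v (\<lambda>y. nsq y * f y) x = complex_of_real (2 * (v \<bullet> x)) * f x + nsq x * tv v f x"
proof -
  have dq: "dquot b (\<lambda>y. nsq y * f y) x = nsq x * dquot b f x"
    if "b \<in> Rp" for b
    using that Rp_sub f R_nz by (auto simp: dquot_mult P_nsq dquot_nsq nsq_refl)
  have s: "(\<Sum>b\<in>Rp. \<kappa> b * complex_of_real (b \<bullet> v) * dquot b (\<lambda>y. nsq y * f y) x)
     = nsq x * (\<Sum>b\<in>Rp. \<kappa> b * complex_of_real (b \<bullet> v) * dquot b f x)"
    apply (subst sum_distrib_left)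
    apply (rule sum.cong, simp)
    apply (simp only: dq)
    apply (simp add: algebra_simps)
    done
  have d: "dir_deriv v (\<lambda>y. nsq y * f y) x = complex_of_real (2 * (v \<bullet> x)) * f x + nsq x * dir_deriv v f x"
    using f by (simp add: dd_mult P_nsq dd_nsq)
  show ?thesis
    unfolding tv_def s d by (simp add: algebra_simps)
qed

lemma tv_comp:
  assumes a: "a \<in> R" and f: "f \<in> polys"
  shows "tv w (\<lambda>y. f (refl a y)) x = tv (refl a w) f (refl a x)"
proof -
  let ?h = "\<lambda>b. \<kappa> b * complex_of_real (b \<bullet> w) * dquot (refl a b) f (refl a x)"
  let ?k = "\<lambda>b. \<kappa> b * complex_of_real (b \<bullet> refl a w) * dquot b f (refl a x)"
  have "(\<Sum>b\<in>Rp. \<kappa> b * complex_of_real (b \<bullet> w) * dquot b (\<lambda>y. f (refl a y)) x) = (\<Sum>b\<in>Rp. ?h b)"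
    using R_nz[OF a] by (simp add: dquot_comp)
  also have "2 * \<dots> = (\<Sum>b\<in>R. ?h b)"
    by (rule sym, rule sum_R_Rp) (simp add: kappa_neg refl_neg_arg dquot_uminus f inner_minus_left)
  also have "\<dots> = (\<Sum>b\<in>R. ?h (refl a b))" by (rule sym, rule sum_R_reindex[OF a])
  also have "\<dots> = (\<Sum>b\<in>R. ?k b)"
    by (rule sum.cong) (auto simp: refl_refl R_nz[OF a] R_ne0[OF a] kappa_refl[OF a] refl_sym)
  also have "\<dots> = 2 * (\<Sum>b\<in>Rp. ?k b)"
    by (rule sum_R_Rp) (simp add: kappa_neg dquot_uminus f inner_minus_left)
  finally have "(\<Sum>b\<in>Rp. \<kappa> b * complex_of_real (b \<bullet> w) * dquot b (\<lambda>y. f (refl a y)) x) = (\<Sum>b\<in>Rp. ?k b)"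
    by simp
  then show ?thesis unfolding tv_def by (simp add: dd_comp_lin[OF refl_linear])
qed

end


inductive_set polys2 :: "(real^'n \<Rightarrow> complex) set" where
  Qc: "(\<lambda>x. c) \<in> polys2"
| Qx: "f \<in> polys2 \<Longrightarrow> (\<lambda>x. complex_of_real (x $ l) * f x) \<in> polys2"
| Qadd: "f \<in> polys2 \<Longrightarrow> g \<in> polys2 \<Longrightarrow> (\<lambda>x. f x + g x) \<in> polys2"

lemma polys2_cmult: "f \<in> polys2 \<Longrightarrow> (\<lambda>x. c * f x) \<in> polys2"
proof (induction f rule: polys2.induct)
  case (Qc c') then show ?case by (rule polys2.Qc)
next
  case (Qx f l)
  have "(\<lambda>x. complex_of_real (x $ l) * (c * f x)) \<in> polys2" by (rule polys2.Qx[OF Qx.IH])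
  then show ?case by (simp add: mult.left_commute)
next
  case (Qadd f g)
  have "(\<lambda>x. c * f x + c * g x) \<in> polys2" by (rule polys2.Qadd[OF Qadd.IH])
  then show ?case by (simp add: distrib_left)
qed

lemma polys2_mult: "f \<in> polys2 \<Longrightarrow> g \<in> polys2 \<Longrightarrow> (\<lambda>x. f x * g x) \<in> polys2"
proof (induction f rule: polys2.induct)
  case (Qc c) then show ?case by (rule polys2_cmult)
next
  case (Qx f l)
  have "(\<lambda>x. complex_of_real (x $ l) * (f x * g x)) \<in> polys2" by (rule polys2.Qx[OF Qx.IH[OF Qx.prems]])
  then show ?case by (simp add: mult.assoc)
next
  case (Qadd f1 f2)
  have "(\<lambda>x. f1 x * g x + f2 x * g x) \<in> polys2" by (rule polys2.Qadd[OF Qadd.IH(1)[OF Qadd.prems] Qadd.IH(2)[OF Qadd.prems]])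
  then show ?case by (simp add: distrib_right)
qed

lemma polys2_polys: "f \<in> polys2 \<Longrightarrow> f \<in> polys"
  by (induction f rule: polys2.induct) (auto intro: Pc Pmult Px Padd)

lemma polys_polys2: "f \<in> polys \<Longrightarrow> f \<in> polys2"
proof (induction f rule: polys.induct)
  case (Pc c) then show ?case by (rule polys2.Qc)
next
  case (Px j)
  have "(\<lambda>x. complex_of_real (x $ j) * 1) \<in> polys2" by (rule polys2.Qx[OF polys2.Qc])
  then show ?case by simp
next
  case (Padd f g) show ?case by (rule polys2.Qadd[OF Padd.IH])
next
  case (Pmult f g) show ?case by (rule polys2_mult[OF Pmult.IH])
qed

context dsetup begin

lemma tv_fun_const: "tv w (\<lambda>x. c) = (\<lambda>x. 0)" by (rule ext) simp

lemma tv_expand: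
  assumes f: "f \<in> polys"
  shows "tv v (tv w (\<lambda>z. complex_of_real (z $ l) * f z)) x =
     complex_of_real (x $ l) * tv v (tv w f) x + complex_of_real (v $ l) * tv w f x + complex_of_real (w $ l) * tv v f x
     + (\<Sum>b\<in>Rp. \<kappa> b * complex_of_real (b $ l) * (complex_of_real (b \<bullet> v) * tv w f (refl b x)
          + complex_of_real (b \<bullet> w) * tv v f (refl b x)
          - complex_of_real (b \<bullet> w) * complex_of_real (b \<bullet> v) * tv b f (refl b x)))"
proof -
  let ?A = "\<lambda>y. complex_of_real (y $ l) * tv w f y"
  let ?B = "\<lambda>y. complex_of_real (w $ l) * f y"
  let ?C = "\<lambda>y. \<Sum>b\<in>Rp. (\<kappa> b * complex_of_real (b \<bullet> w) * complex_of_real (b $ l)) * f (refl b y)"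
  have twf: "(\<lambda>y. tv w f y) \<in> polys" by (rule tv_P[OF f])
  have PA: "?A \<in> polys" by (rule Pmult[OF Px twf])
  have PB: "?B \<in> polys" by (rule P_cmult[OF f])
  have PCi: "(\<lambda>y. (\<kappa> b * complex_of_real (b \<bullet> w) * complex_of_real (b $ l)) * f (refl b y)) \<in> polys" for b
    by (rule P_cmult[OF P_refl[OF f]])
  have PC: "?C \<in> polys" by (rule P_sum[OF finRp PCi])
  have e1: "tv w (\<lambda>z. complex_of_real (z $ l) * f z) = (\<lambda>y. ?A y + ?B y + ?C y)"
    by (rule ext) (simp add: tv_coordmul[OF f] mult.assoc)
  have "tv v (\<lambda>y. ?A y + ?B y + ?C y) x = tv v ?A x + tv v ?B x + tv v ?C x"
    using PA PB PC by (simp add: tv_add Padd)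
  also have "tv v ?A x = complex_of_real (x $ l) * tv v (tv w f) x + complex_of_real (v $ l) * tv w f x
         + (\<Sum>b\<in>Rp. \<kappa> b * complex_of_real (b \<bullet> v) * complex_of_real (b $ l) * tv w f (refl b x))"
    using tv_coordmul[OF twf, of v l x] by simp
  also have "tv v ?B x = complex_of_real (w $ l) * tv v f x" by (rule tv_cmult[OF f])
  also have "tv v ?C x = (\<Sum>b\<in>Rp. (\<kappa> b * complex_of_real (b \<bullet> w) * complex_of_real (b $ l)) * tv v (\<lambda>y. f (refl b y)) x)"
    by (simp add: tv_sum[OF finRp PCi] tv_cmult[OF P_refl[OF f]])
  also have "\<dots> = (\<Sum>b\<in>Rp. (\<kappa> b * complex_of_real (b \<bullet> w) * complex_of_real (b $ l)) * (tv v f (refl b x) - complex_of_real (b \<bullet> v) * tv b f (refl b x)))"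
  proof (rule sum.cong[OF refl])
    fix b assume b: "b \<in> Rp"
    then have bR: "b \<in> R" using Rp_sub by blast
    have "tv v (\<lambda>y. f (refl b y)) x = tv (refl b v) f (refl b x)" by (rule tv_comp[OF bR f])
    also have "\<dots> = tv v f (refl b x) - complex_of_real (b \<bullet> v) * tv b f (refl b x)"
      by (simp add: refl2[OF R_norm[OF bR]] tv_vdiff[OF f] tv_vscale[OF f])
    finally show "(\<kappa> b * complex_of_real (b \<bullet> w) * complex_of_real (b $ l)) * tv v (\<lambda>y. f (refl b y)) x =
      (\<kappa> b * complex_of_real (b \<bullet> w) * complex_of_real (b $ l)) * (tv v f (refl b x) - complex_of_real (b \<bullet> v) * tv b f (refl b x))"
      by simp
  qed
  finally have "tv v (tv w (\<lambda>z. complex_of_real (z $ l) * f z)) x =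
      complex_of_real (x $ l) * tv v (tv w f) x + complex_of_real (v $ l) * tv w f x
         + (\<Sum>b\<in>Rp. \<kappa> b * complex_of_real (b \<bullet> v) * complex_of_real (b $ l) * tv w f (refl b x))
      + complex_of_real (w $ l) * tv v f x
      + (\<Sum>b\<in>Rp. (\<kappa> b * complex_of_real (b \<bullet> w) * complex_of_real (b $ l)) * (tv v f (refl b x) - complex_of_real (b \<bullet> v) * tv b f (refl b x)))"
    unfolding e1 .
  moreover have "(\<Sum>b\<in>Rp. \<kappa> b * complex_of_real (b \<bullet> v) * complex_of_real (b $ l) * tv w f (refl b x))
      + (\<Sum>b\<in>Rp. (\<kappa> b * complex_of_real (b \<bullet> w) * complex_of_real (b $ l)) * (tv v f (refl b x) - complex_of_real (b \<bullet> v) * tv b f (refl b x)))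
      = (\<Sum>b\<in>Rp. \<kappa> b * complex_of_real (b $ l) * (complex_of_real (b \<bullet> v) * tv w f (refl b x)
          + complex_of_real (b \<bullet> w) * tv v f (refl b x)
          - complex_of_real (b \<bullet> w) * complex_of_real (b \<bullet> v) * tv b f (refl b x)))"
    by (subst sum.distrib[symmetric], rule sum.cong[OF refl]) (simp add: algebra_simps)
  ultimately show ?thesis by (simp add: algebra_simps)
qed

lemma tv_comm2: "f \<in> polys2 \<Longrightarrow> \<forall>v w x. tv v (tv w f) x = tv w (tv v f) x"
proof (induction f rule: polys2.induct)
  case (Qc c) then show ?case by (simp add: tv_fun_const)
next
  case (Qx f l)
  have f: "f \<in> polys" by (rule polys2_polys[OF Qx.hyps])
  show ?case
  proof (intro allI)
    fix v w x
    show "tv v (tv w (\<lambda>x. complex_of_real (x $ l) * f x)) x = tv w (tv v (\<lambda>x. complex_of_real (x $ l) * f x)) x"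
      unfolding tv_expand[OF f] using Qx.IH by (simp add: algebra_simps)
  qed
next
  case (Qadd f g)
  have f: "f \<in> polys" and g: "g \<in> polys" using polys2_polys Qadd.hyps by auto
  have e: "tv u (\<lambda>x. f x + g x) = (\<lambda>y. tv u f y + tv u g y)" for u
    by (rule ext) (simp add: tv_add f g)
  show ?case using Qadd.IH by (simp add: e tv_add tv_P f g)
qed

lemma tv_comm: "f \<in> polys \<Longrightarrow> tv v (tv w f) x = tv w (tv v f) x"
  using tv_comm2[OF polys_polys2] by blast

lemma dunkl_comm: "f \<in> polys \<Longrightarrow> dunkl Rp \<kappa> i (dunkl Rp \<kappa> j f) x = dunkl Rp \<kappa> j (dunkl Rp \<kappa> i f) x"
  by (simp add: dunkl_tv_fun tv_comm)

end


lemma symdiff1_twice[simp]: "symdiff1 (symdiff1 B i) i = B"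
  unfolding symdiff1_def by auto

lemma symdiff1_comm: "symdiff1 (symdiff1 B i) j = symdiff1 (symdiff1 B j) i"
  unfolding symdiff1_def by auto

lemma symdiff1_mem: "i \<noteq> j \<Longrightarrow> (i \<in> symdiff1 A j) = (i \<in> A)"
  unfolding symdiff1_def by auto

lemma sg1: "\<not> j < i \<Longrightarrow> i \<noteq> j \<Longrightarrow> clif_sign i (symdiff1 A j) = clif_sign (i::'n::{finite,linorder}) A"
proof -
  assume a: "\<not> j < i" "i \<noteq> j"
  have "{l \<in> symdiff1 A j. l < i} = {l \<in> A. l < i}" using a unfolding symdiff1_def by auto
  then show ?thesis unfolding clif_sign_def using symdiff1_mem[OF a(2)] by simp
qed

lemma sg2: "i < j \<Longrightarrow> clif_sign j (symdiff1 A i) = - clif_sign (j::'n::{finite,linorder}) A"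
proof -
  assume a: "i < j"
  then have ne: "j \<noteq> i" by simp
  have c: "(-1::complex) ^ card {l \<in> symdiff1 A i. l < j} = - ((-1) ^ card {l \<in> A. l < j})"
  proof (cases "i \<in> A")
    case True
    then have c1: "{l \<in> symdiff1 A i. l < j} = {l \<in> A. l < j} - {i}" unfolding symdiff1_def by auto
    have "i \<in> {l \<in> A. l < j}" using True a by simp
    then have c2: "card {l \<in> A. l < j} = Suc (card ({l \<in> A. l < j} - {i}))"
      by (intro card_Suc_Diff1[symmetric]) simp_all
    show ?thesis by (simp only: c1 c2 power_Suc) simp
  next
    case False
    then have "{l \<in> symdiff1 A i. l < j} = insert i {l \<in> A. l < j}" unfolding symdiff1_def using a by auto
    moreover have "i \<notin> {l \<in> A. l < j}" using False by simp
    ultimately show ?thesis by simp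
  qed
  show ?thesis unfolding clif_sign_def using symdiff1_mem[OF ne] c by simp
qed

lemma sg3: "clif_sign i (symdiff1 A i) * clif_sign i A = -1"
proof -
  have "{l \<in> symdiff1 A i. l < i} = {l \<in> A. l < i}" unfolding symdiff1_def by auto
  moreover have "(i \<in> symdiff1 A i) = (i \<notin> A)" unfolding symdiff1_def by auto
  ultimately show ?thesis unfolding clif_sign_def
    by (auto simp: power_add[symmetric] mult_2[symmetric] power_mult)
qed

definition sg :: "'n::{finite,linorder} \<Rightarrow> 'n set \<Rightarrow> complex" where
  "sg i A = clif_sign i (symdiff1 A i)"

definition cc :: "'n::{finite,linorder} \<Rightarrow> 'n \<Rightarrow> 'n set \<Rightarrow> complex" where
  "cc j i A = sg j A * sg i (symdiff1 A j)"

lemma cc_anti_lt: "i < j \<Longrightarrow> cc j i A + cc i j A = 0"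
proof -
  assume a: "i < j"
  have "clif_sign i (symdiff1 (symdiff1 A j) i) = clif_sign i (symdiff1 (symdiff1 A i) j)"
    by (simp add: symdiff1_comm)
  also have "\<dots> = clif_sign i (symdiff1 A i)" using a by (intro sg1) auto
  finally have e1: "clif_sign i (symdiff1 (symdiff1 A j) i) = clif_sign i (symdiff1 A i)" .
  have "clif_sign j (symdiff1 (symdiff1 A i) j) = clif_sign j (symdiff1 (symdiff1 A j) i)"
    by (simp add: symdiff1_comm)
  also have "\<dots> = - clif_sign j (symdiff1 A j)" using a by (rule sg2)
  finally have e2: "clif_sign j (symdiff1 (symdiff1 A i) j) = - clif_sign j (symdiff1 A j)" .
  show ?thesis unfolding cc_def sg_def using e1 e2 by simp
qed

lemma cc_anti: "cc j i A + cc i j A = (if i = j then -2 else 0)"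
proof (cases "i = j")
  case True
  have "cc i i A = -1" unfolding cc_def sg_def
    using sg3[of i A] by (simp add: mult.commute)
  then show ?thesis using True by simp
next
  case False
  then have "i < j \<or> j < i" by auto
  then show ?thesis using cc_anti_lt[of i j A] cc_anti_lt[of j i A] False by (auto simp: add.commute)
qed

lemma sym_sum:
  fixes K :: "'n::{finite,linorder} \<Rightarrow> 'n \<Rightarrow> complex"
  assumes "\<And>i j. K i j = K j i"
  shows "(\<Sum>j\<in>UNIV. \<Sum>i\<in>UNIV. cc j i A * K j i) = - (\<Sum>i\<in>UNIV. K i i)"
proof -
  let ?S = "(\<Sum>j\<in>UNIV. \<Sum>i\<in>UNIV. cc j i A * K j i)"
  let ?T = "(\<Sum>j\<in>UNIV. \<Sum>i\<in>UNIV. cc i j A * K j i)"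
  have "?S = (\<Sum>j\<in>UNIV. \<Sum>i\<in>UNIV. cc i j A * K i j)" by (rule sum.swap)
  also have "\<dots> = ?T"
  proof (intro sum.cong refl)
    fix i j show "cc i j A * K i j = cc i j A * K j i" using assms[of i j] by (simp only:)
  qed
  finally have ST: "?S = ?T" .
  have "?S + ?T = (\<Sum>j\<in>UNIV. \<Sum>i\<in>UNIV. cc j i A * K j i + cc i j A * K j i)"
    by (simp only: sum.distrib)
  also have "\<dots> = (\<Sum>j\<in>UNIV. \<Sum>i\<in>UNIV. (if i = j then -2 * K j j else 0))"
  proof (intro sum.cong refl)
    fix i j show "cc j i A * K j i + cc i j A * K j i = (if i = j then -2 * K j j else 0)"
      using cc_anti[of j i A] by (cases "i = j") (simp_all add: distrib_right[symmetric])
  qed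
  also have "\<dots> = (\<Sum>j\<in>UNIV. -2 * K j j)" by (intro sum.cong refl) (simp only: sum.delta finite UNIV_I if_True)
  also have "\<dots> = -2 * (\<Sum>j\<in>UNIV. K j j)" by (rule sum_distrib_left[symmetric])
  finally show ?thesis using ST by simp
qed


context dsetup begin

definition mu :: complex where "mu = of_nat CARD('n) + 2 * (\<Sum>b\<in>Rp. \<kappa> b)"

definition Eop where
  "Eop g x = dir_deriv x g x"

definition Lop where
  "Lop g x = - dunkl_laplacian Rp \<kappa> g x + 4 * Eop g x + 2 * mu * g x - 4 * nsq x * g x"

lemma Dp_comp: "D_plus Rp \<kappa> G x A =
  (\<Sum>i\<in>UNIV. sg i A * (- dunkl Rp \<kappa> i (\<lambda>y. G y (symdiff1 A i)) x + 2 * complex_of_real (x $ i) * G x (symdiff1 A i)))"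
proof -
  have "D_plus Rp \<kappa> G x A = - (\<Sum>i\<in>UNIV. sg i A * dunkl Rp \<kappa> i (\<lambda>y. G y (symdiff1 A i)) x)
      + 2 * (\<Sum>i\<in>UNIV. complex_of_real (x $ i) * (sg i A * G x (symdiff1 A i)))"
    unfolding D_plus_def dirac_def e_mult_def dunkl_clif_def sg_def by simp
  also have "\<dots> = (\<Sum>i\<in>UNIV. sg i A * (- dunkl Rp \<kappa> i (\<lambda>y. G y (symdiff1 A i)) x + 2 * complex_of_real (x $ i) * G x (symdiff1 A i)))"
    by (simp add: sum_distrib_left sum_negf[symmetric] sum.distrib[symmetric] algebra_simps)
  finally show ?thesis .
qed

lemma tv_zero[simp]: "tv 0 g x = 0"
proof -
  have "dir_deriv 0 g x = 0" by (rule dd_eqI) simp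
  then show ?thesis unfolding tv_def by simp
qed

lemma tv_vsum: assumes g: "g \<in> polys" and I: "finite I" shows
  "tv (\<Sum>i\<in>I. c i *\<^sub>R v i) g x = (\<Sum>i\<in>I. complex_of_real (c i) * tv (v i) g x)"
  using I
proof (induction I rule: finite_induct)
  case empty then show ?case by simp
next
  case (insert a I) then show ?case by (simp add: tv_vadd[OF g] tv_vscale[OF g])
qed

lemma x_dunkl: assumes g: "g \<in> polys"
  shows "(\<Sum>i\<in>UNIV. complex_of_real (x $ i) * dunkl Rp \<kappa> i g x) = Eop g x + (\<Sum>b\<in>Rp. \<kappa> b * (g x - g (refl b x)))"
proof -
  have "(\<Sum>i\<in>UNIV. complex_of_real (x $ i) * dunkl Rp \<kappa> i g x) = tv (\<Sum>i\<in>UNIV. (x $ i) *\<^sub>R axis i 1) g x"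
    by (simp add: tv_vsum[OF g] dunkl_tv)
  also have "(\<Sum>i\<in>UNIV. (x $ i) *\<^sub>R axis i 1) = x"
    using basis_expansion[of x] by (simp add: scalar_mult_eq_scaleR)
  also have "tv x g x = Eop g x + (\<Sum>b\<in>Rp. \<kappa> b * (g x - g (refl b x)))"
    unfolding tv_def Eop_def
  proof (intro arg_cong2[where f="(+)"] refl sum.cong)
    fix b assume "b \<in> Rp" then have "b \<bullet> b = 2" using Rp_sub R_norm by blast
    then show "\<kappa> b * complex_of_real (b \<bullet> x) * dquot b g x = \<kappa> b * (g x - g (refl b x))"
      using inner_dquot[of b x g] by (simp add: mult.assoc)
  qed
  finally show ?thesis .
qed

lemma dunkl_P: "g \<in> polys \<Longrightarrow> (\<lambda>x. dunkl Rp \<kappa> i g x) \<in> polys"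
  by (simp add: dunkl_tv tv_P)

lemma dunkl_coordmul: assumes f: "f \<in> polys"
  shows "dunkl Rp \<kappa> j (\<lambda>y. complex_of_real (y $ i) * f y) x =
    complex_of_real (x $ i) * dunkl Rp \<kappa> j f x + (if i = j then f x else 0)
    + (\<Sum>b\<in>Rp. \<kappa> b * complex_of_real (b $ j) * complex_of_real (b $ i) * f (refl b x))"
proof -
  have a1: "axis j 1 $ i = (if i = j then 1 else (0::real))" by (simp add: axis_def)
  have a2: "b \<bullet> axis j 1 = b $ j" for b :: "real^_" by (simp add: inner_axis)
  show ?thesis unfolding dunkl_tv tv_coordmul[OF f] a1 a2 by simp
qed

lemma dunkl_add: "f \<in> polys \<Longrightarrow> g \<in> polys \<Longrightarrow> dunkl Rp \<kappa> j (\<lambda>x. f x + g x) x = dunkl Rp \<kappa> j f x + dunkl Rp \<kappa> j g x"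
  by (simp add: dunkl_tv tv_add)
lemma dunkl_cmult: "f \<in> polys \<Longrightarrow> dunkl Rp \<kappa> j (\<lambda>x. c * f x) x = c * dunkl Rp \<kappa> j f x"
  by (simp add: dunkl_tv tv_cmult)
lemma dunkl_sum: "finite I \<Longrightarrow> (\<And>i. i \<in> I \<Longrightarrow> f i \<in> polys) \<Longrightarrow>
   dunkl Rp \<kappa> j (\<lambda>x. \<Sum>i\<in>I. f i x) x = (\<Sum>i\<in>I. dunkl Rp \<kappa> j (f i) x)"
  by (simp add: dunkl_tv tv_sum)

lemma Dp_P: assumes PC: "\<And>B. (\<lambda>y. F y B) \<in> polys" shows "(\<lambda>y. D_plus Rp \<kappa> F y B) \<in> polys"
proof -
  have "(\<lambda>y. \<Sum>i\<in>UNIV. sg i B * (- dunkl Rp \<kappa> i (\<lambda>y. F y (symdiff1 B i)) y + 2 * complex_of_real (y $ i) * F y (symdiff1 B i))) \<in> polys"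
    apply (rule P_sum, simp)
    apply (rule P_cmult)
    apply (rule Padd)
     apply (rule P_neg, rule dunkl_P, rule PC)
    apply (rule Pmult, rule P_cmult, rule Px, rule PC)
    done
  then show ?thesis by (simp only: Dp_comp)
qed

lemma dunkl_neg: "f \<in> polys \<Longrightarrow> dunkl Rp \<kappa> j (\<lambda>x. - f x) x = - dunkl Rp \<kappa> j f x"
  using dunkl_cmult[where f=f and c="-1"] by simp

lemma Dp_inner: assumes PC: "\<And>B. (\<lambda>y. F y B) \<in> polys"
  shows "dunkl Rp \<kappa> j (\<lambda>y. D_plus Rp \<kappa> F y B) x =
    (\<Sum>i\<in>UNIV. sg i B * (- dunkl Rp \<kappa> j (dunkl Rp \<kappa> i (\<lambda>y. F y (symdiff1 B i))) x
        + 2 * dunkl Rp \<kappa> j (\<lambda>y. complex_of_real (y $ i) * F y (symdiff1 B i)) x))"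
proof -
  have e: "(\<lambda>y. D_plus Rp \<kappa> F y B) = (\<lambda>y. \<Sum>i\<in>UNIV. sg i B * (- dunkl Rp \<kappa> i (\<lambda>y. F y (symdiff1 B i)) y + 2 * (complex_of_real (y $ i) * F y (symdiff1 B i))))"
    by (rule ext) (simp add: Dp_comp mult.assoc)
  have P1: "(\<lambda>y. - dunkl Rp \<kappa> i (\<lambda>y. F y (symdiff1 B i)) y) \<in> polys" for i
    by (rule P_neg, rule dunkl_P, rule PC)
  have P2: "(\<lambda>y. complex_of_real (y $ i) * F y (symdiff1 B i)) \<in> polys" for i
    by (rule Pmult, rule Px, rule PC)
  have P3: "(\<lambda>y. 2 * (complex_of_real (y $ i) * F y (symdiff1 B i))) \<in> polys" for i
    by (rule P_cmult, rule P2)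
  have P4: "(\<lambda>y. - dunkl Rp \<kappa> i (\<lambda>y. F y (symdiff1 B i)) y + 2 * (complex_of_real (y $ i) * F y (symdiff1 B i))) \<in> polys" for i
    by (rule Padd[OF P1 P3])
  have P5: "(\<lambda>y. sg i B * (- dunkl Rp \<kappa> i (\<lambda>y. F y (symdiff1 B i)) y + 2 * (complex_of_real (y $ i) * F y (symdiff1 B i)))) \<in> polys" for i
    by (rule P_cmult[OF P4])
  show ?thesis
    unfolding e
    apply (subst dunkl_sum, simp, rule P5)
    apply (rule sum.cong[OF refl])
    apply (subst dunkl_cmult[OF P4])
    apply (subst dunkl_add[OF P1 P3])
    apply (subst dunkl_neg[OF dunkl_P[OF PC]])
    apply (subst dunkl_cmult[OF P2])
    apply (rule refl)
    done
qed

lemma Dplus2_K: assumes PC: "\<And>B. (\<lambda>y. F y B) \<in> polys"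
  shows "D_plus Rp \<kappa> (D_plus Rp \<kappa> F) x A =
    (\<Sum>j\<in>UNIV. \<Sum>i\<in>UNIV. cc j i A *
      (dunkl Rp \<kappa> j (dunkl Rp \<kappa> i (\<lambda>y. F y (symdiff1 (symdiff1 A j) i))) x
       - 2 * dunkl Rp \<kappa> j (\<lambda>y. complex_of_real (y $ i) * F y (symdiff1 (symdiff1 A j) i)) x
       - 2 * complex_of_real (x $ j) * dunkl Rp \<kappa> i (\<lambda>y. F y (symdiff1 (symdiff1 A j) i)) x
       + 4 * complex_of_real (x $ j) * complex_of_real (x $ i) * F x (symdiff1 (symdiff1 A j) i)))"
proof -
  have "D_plus Rp \<kappa> (D_plus Rp \<kappa> F) x A =
    (\<Sum>j\<in>UNIV. sg j A * (- dunkl Rp \<kappa> j (\<lambda>y. D_plus Rp \<kappa> F y (symdiff1 A j)) x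
        + 2 * complex_of_real (x $ j) * D_plus Rp \<kappa> F x (symdiff1 A j)))"
    by (rule Dp_comp)
  also have "\<dots> = (\<Sum>j\<in>UNIV. \<Sum>i\<in>UNIV. cc j i A *
      (dunkl Rp \<kappa> j (dunkl Rp \<kappa> i (\<lambda>y. F y (symdiff1 (symdiff1 A j) i))) x
       - 2 * dunkl Rp \<kappa> j (\<lambda>y. complex_of_real (y $ i) * F y (symdiff1 (symdiff1 A j) i)) x
       - 2 * complex_of_real (x $ j) * dunkl Rp \<kappa> i (\<lambda>y. F y (symdiff1 (symdiff1 A j) i)) x
       + 4 * complex_of_real (x $ j) * complex_of_real (x $ i) * F x (symdiff1 (symdiff1 A j) i)))"
  proof (rule sum.cong[OF refl])
    fix j
    show "sg j A * (- dunkl Rp \<kappa> j (\<lambda>y. D_plus Rp \<kappa> F y (symdiff1 A j)) x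
        + 2 * complex_of_real (x $ j) * D_plus Rp \<kappa> F x (symdiff1 A j)) = (\<Sum>i\<in>UNIV. cc j i A *
      (dunkl Rp \<kappa> j (dunkl Rp \<kappa> i (\<lambda>y. F y (symdiff1 (symdiff1 A j) i))) x
       - 2 * dunkl Rp \<kappa> j (\<lambda>y. complex_of_real (y $ i) * F y (symdiff1 (symdiff1 A j) i)) x
       - 2 * complex_of_real (x $ j) * dunkl Rp \<kappa> i (\<lambda>y. F y (symdiff1 (symdiff1 A j) i)) x
       + 4 * complex_of_real (x $ j) * complex_of_real (x $ i) * F x (symdiff1 (symdiff1 A j) i)))"
      unfolding Dp_inner[OF PC] Dp_comp[of F x "symdiff1 A j"] cc_def
      by (simp add: sum_distrib_left sum_negf[symmetric] sum.distrib[symmetric] algebra_simps)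
  qed
  finally show ?thesis .
qed

lemma sum_sq_inner: "(\<Sum>i\<in>UNIV. complex_of_real (b $ i) * complex_of_real (b $ i)) = complex_of_real (b \<bullet> b)"
  by (simp add: inner_vec_def)

lemma sum_sq_nsq: "(\<Sum>i\<in>UNIV. complex_of_real (x $ i) * complex_of_real (x $ i)) = nsq x"
  by (simp add: nsq_def power2_norm_eq_inner inner_vec_def)

lemma Dplus2: assumes PC: "\<And>B. (\<lambda>y. F y B) \<in> polys"
  shows "D_plus Rp \<kappa> (D_plus Rp \<kappa> F) x A = Lop (\<lambda>y. F y A) x"
proof -
  define C where "C j i = symdiff1 (symdiff1 A j) i" for j i
  define K where "K j i = dunkl Rp \<kappa> j (dunkl Rp \<kappa> i (\<lambda>y. F y (C j i))) x
       - 2 * (complex_of_real (x $ i) * dunkl Rp \<kappa> j (\<lambda>y. F y (C j i)) x + (if i = j then F x (C j i) else 0)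
          + (\<Sum>b\<in>Rp. \<kappa> b * complex_of_real (b $ j) * complex_of_real (b $ i) * F (refl b x) (C j i)))
       - 2 * complex_of_real (x $ j) * dunkl Rp \<kappa> i (\<lambda>y. F y (C j i)) x
       + 4 * complex_of_real (x $ j) * complex_of_real (x $ i) * F x (C j i)" for j i
  have Csym: "C j i = C i j" for i j unfolding C_def by (rule symdiff1_comm)
  have CA: "C i i = A" for i unfolding C_def by simp
  have "D_plus Rp \<kappa> (D_plus Rp \<kappa> F) x A = (\<Sum>j\<in>UNIV. \<Sum>i\<in>UNIV. cc j i A * K j i)"
    unfolding Dplus2_K[OF PC] K_def C_def dunkl_coordmul[OF PC] by (rule refl)
  also have "\<dots> = - (\<Sum>i\<in>UNIV. K i i)"
  proof (rule sym_sum)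
    fix i j
    show "K i j = K j i"
      unfolding K_def Csym[of i j] dunkl_comm[OF PC, of i j "C j i"]
      by (simp add: algebra_simps)
  qed
  also have "(\<Sum>i\<in>UNIV. K i i) = (\<Sum>i\<in>UNIV. dunkl Rp \<kappa> i (dunkl Rp \<kappa> i (\<lambda>y. F y A)) x)
        - 4 * (\<Sum>i\<in>UNIV. complex_of_real (x $ i) * dunkl Rp \<kappa> i (\<lambda>y. F y A) x)
        - 2 * (\<Sum>i\<in>(UNIV::'n set). F x A)
        - 2 * (\<Sum>i\<in>UNIV. \<Sum>b\<in>Rp. \<kappa> b * (complex_of_real (b $ i) * complex_of_real (b $ i)) * F (refl b x) A)
        + 4 * (\<Sum>i\<in>UNIV. complex_of_real (x $ i) * complex_of_real (x $ i)) * F x A"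
    unfolding K_def CA
    by (simp add: sum.distrib sum_subtractf sum_distrib_left sum_distrib_right algebra_simps)
  also have "(\<Sum>i\<in>UNIV. \<Sum>b\<in>Rp. \<kappa> b * (complex_of_real (b $ i) * complex_of_real (b $ i)) * F (refl b x) A)
      = (\<Sum>b\<in>Rp. \<kappa> b * 2 * F (refl b x) A)"
  proof -
    have "(\<Sum>i\<in>UNIV. \<Sum>b\<in>Rp. \<kappa> b * (complex_of_real (b $ i) * complex_of_real (b $ i)) * F (refl b x) A)
      = (\<Sum>b\<in>Rp. \<Sum>i\<in>UNIV. \<kappa> b * (complex_of_real (b $ i) * complex_of_real (b $ i)) * F (refl b x) A)"
      by (rule sum.swap)
    also have "\<dots> = (\<Sum>b\<in>Rp. \<kappa> b * (\<Sum>i\<in>UNIV. complex_of_real (b $ i) * complex_of_real (b $ i)) * F (refl b x) A)"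
      by (simp add: sum_distrib_left sum_distrib_right)
    also have "\<dots> = (\<Sum>b\<in>Rp. \<kappa> b * 2 * F (refl b x) A)"
    proof (rule sum.cong[OF refl])
      fix b assume "b \<in> Rp" then have "b \<bullet> b = 2" using Rp_sub R_norm by blast
      then show "\<kappa> b * (\<Sum>i\<in>UNIV. complex_of_real (b $ i) * complex_of_real (b $ i)) * F (refl b x) A = \<kappa> b * 2 * F (refl b x) A"
        by (simp only: sum_sq_inner) simp
    qed
    finally show ?thesis .
  qed
  also have "(\<Sum>i\<in>UNIV. complex_of_real (x $ i) * dunkl Rp \<kappa> i (\<lambda>y. F y A) x) = Eop (\<lambda>y. F y A) x + (\<Sum>b\<in>Rp. \<kappa> b * (F x A - F (refl b x) A))"
    by (rule x_dunkl[OF PC])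
  also note sum_sq_nsq
  finally show ?thesis
    unfolding Lop_def mu_def dunkl_laplacian_def
    by (simp add: sum_subtractf sum_distrib_left sum_distrib_right algebra_simps)
qed

end


lemma hom_scale:
  assumes "hom_poly k H"
  shows "H (c *\<^sub>R x) = c ^ k * H x"
proof -
  obtain cf where H: "H = (\<lambda>x. \<Sum>a\<in>{a. sum a UNIV = k}. cf a * (\<Prod>i\<in>UNIV. (x $ i) ^ a i))"
    using assms unfolding hom_poly_def by blast
  have "(\<Prod>i\<in>UNIV. ((c *\<^sub>R x) $ i) ^ a i) = c ^ k * (\<Prod>i\<in>UNIV. (x $ i) ^ a i)" if "sum a UNIV = k" for a
  proof -
    have "(\<Prod>i\<in>UNIV. ((c *\<^sub>R x) $ i) ^ a i) = (\<Prod>i\<in>UNIV. c ^ a i * (x $ i) ^ a i)"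
      by (simp add: power_mult_distrib)
    also have "\<dots> = (\<Prod>i\<in>UNIV. c ^ a i) * (\<Prod>i\<in>UNIV. (x $ i) ^ a i)" by (rule prod.distrib)
    also have "(\<Prod>i\<in>UNIV. c ^ a i) = c ^ (sum a UNIV)" by (rule power_sum[symmetric])
    also have "\<dots> = c ^ k" using that by simp
    finally show ?thesis .
  qed
  then show ?thesis unfolding H by (simp add: sum_distrib_left algebra_simps)
qed

lemma hom_P:
  assumes "hom_poly k H"
  shows "(\<lambda>x. complex_of_real (H x)) \<in> polys"
proof -
  obtain cf where H: "H = (\<lambda>x. \<Sum>a\<in>{a. sum a UNIV = k}. cf a * (\<Prod>i\<in>UNIV. (x $ i) ^ a i))"
    using assms unfolding hom_poly_def by blast
  show ?thesis
  proof (cases "finite {a :: 'a \<Rightarrow> nat. sum a UNIV = k}")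
    case True
    have "(\<lambda>x. \<Sum>a\<in>{a. sum a UNIV = k}. complex_of_real (cf a) * (\<Prod>i\<in>UNIV. complex_of_real (x $ i) ^ a i)) \<in> polys"
      by (intro P_sum True P_cmult P_prod P_pow Px) auto
    then show ?thesis unfolding H by simp
  next
    case False
    then show ?thesis unfolding H using Pc[of 0] by simp
  qed
qed

lemma hom_euler:
  assumes "hom_poly k H"
  shows "dir_deriv x (\<lambda>x. complex_of_real (H x)) x = of_nat k * complex_of_real (H x)"
proof (rule dd_eqI)
  have e: "(\<lambda>s. complex_of_real (H (x + s *\<^sub>R x))) = (\<lambda>s. complex_of_real ((1 + s) ^ k) * complex_of_real (H x))"
  proof
    fix s :: real
    have "x + s *\<^sub>R x = (1 + s) *\<^sub>R x" by (simp add: algebra_simps)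
    then show "complex_of_real (H (x + s *\<^sub>R x)) = complex_of_real ((1 + s) ^ k) * complex_of_real (H x)"
      using hom_scale[OF assms, of "1 + s" x] by simp
  qed
  have "((\<lambda>s. (1 + s) ^ k) has_real_derivative real k) (at (0::real))"
  proof -
    have "((\<lambda>s::real. (1 + s) ^ k) has_real_derivative real k * (1 + 0) ^ (k - 1) * 1) (at 0)"
      by (auto intro!: derivative_eq_intros)
    then show ?thesis by simp
  qed
  then have "((\<lambda>s. complex_of_real ((1 + s) ^ k)) has_vector_derivative complex_of_real (real k)) (at 0)"
    by (rule has_vector_derivative_of_real)
  then have "((\<lambda>s. complex_of_real ((1 + s) ^ k) * complex_of_real (H x)) has_vector_derivative complex_of_real (real k) * complex_of_real (H x)) (at 0)"
    by (rule has_vector_derivative_mult_left)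
  then show "((\<lambda>s. complex_of_real (H (x + s *\<^sub>R x))) has_vector_derivative of_nat k * complex_of_real (H x)) (at 0)"
    unfolding e by simp
qed

definition Q :: "complex poly \<Rightarrow> real^'n \<Rightarrow> complex" where "Q p y = poly p (nsq y)"

lemma Q_pCons: "Q (pCons a p) = (\<lambda>y. a + nsq y * Q p y)"
  unfolding Q_def by (simp add: fun_eq_iff)

lemma Q_P: "Q p \<in> polys"
proof (induction p)
  case 0 then show ?case unfolding Q_def using Pc[of 0] by simp
next
  case (pCons a p)
  then show ?case unfolding Q_pCons by (intro Padd Pc Pmult P_nsq)
qed

context dsetup begin

lemma Eop_mult: "f \<in> polys \<Longrightarrow> g \<in> polys \<Longrightarrow> Eop (\<lambda>x. f x * g x) x = Eop f x * g x + f x * Eop g x"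
  unfolding Eop_def by (rule dd_mult)
lemma Eop_add: "f \<in> polys \<Longrightarrow> g \<in> polys \<Longrightarrow> Eop (\<lambda>x. f x + g x) x = Eop f x + Eop g x"
  unfolding Eop_def by (rule dd_add)
lemma Eop_const[simp]: "Eop (\<lambda>x. c) x = 0"
  unfolding Eop_def by simp
lemma Eop_nsq: "Eop nsq x = 2 * nsq x"
  unfolding Eop_def dd_nsq nsq_def by (simp add: power2_norm_eq_inner)

lemma Eop_Q: "Eop (Q p) x = 2 * nsq x * poly (pderiv p) (nsq x)"
proof (induction p)
  case 0 then show ?case unfolding Q_def by simp
next
  case (pCons a p)
  have "Eop (Q (pCons a p)) x = Eop (\<lambda>y. nsq y * Q p y) x"
    unfolding Q_pCons Eop_def by (simp add: dd_add Pc Pmult P_nsq Q_P)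
  also have "\<dots> = 2 * nsq x * Q p x + nsq x * Eop (Q p) x"
    by (simp add: Eop_mult P_nsq Q_P Eop_nsq)
  finally show ?case using pCons.IH unfolding Q_def by (simp add: pderiv_pCons algebra_simps)
qed

lemma dunkl_nsqmul: "f \<in> polys \<Longrightarrow> dunkl Rp \<kappa> i (\<lambda>y. nsq y * f y) x = 2 * (complex_of_real (x $ i) * f x) + nsq x * dunkl Rp \<kappa> i f x"
  by (simp add: dunkl_tv tv_normsqmul inner_axis')

lemma lap_nsq: assumes g: "g \<in> polys"
  shows "dunkl_laplacian Rp \<kappa> (\<lambda>y. nsq y * g y) x = nsq x * dunkl_laplacian Rp \<kappa> g x + 4 * Eop g x + 2 * mu * g x"
proof -
  have t1: "dunkl Rp \<kappa> i (\<lambda>y. nsq y * g y) = (\<lambda>y. 2 * (complex_of_real (y $ i) * g y) + nsq y * dunkl Rp \<kappa> i g y)" for i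
    by (rule ext) (simp add: dunkl_tv tv_normsqmul[OF g] inner_axis' mult.assoc)
  have Pa: "(\<lambda>y. 2 * (complex_of_real (y $ i) * g y)) \<in> polys" for i by (intro P_cmult Pmult Px g)
  have Pb: "(\<lambda>y. nsq y * dunkl Rp \<kappa> i g y) \<in> polys" for i by (intro Pmult P_nsq dunkl_P g)
  have "dunkl Rp \<kappa> i (dunkl Rp \<kappa> i (\<lambda>y. nsq y * g y)) x =
     2 * (complex_of_real (x $ i) * dunkl Rp \<kappa> i g x + g x + (\<Sum>b\<in>Rp. \<kappa> b * complex_of_real (b $ i) * complex_of_real (b $ i) * g (refl b x)))
     + (2 * complex_of_real (x $ i) * dunkl Rp \<kappa> i g x + nsq x * dunkl Rp \<kappa> i (dunkl Rp \<kappa> i g) x)" for i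
    unfolding t1
    by (simp add: dunkl_add[OF Pa Pb] dunkl_cmult[OF Pmult[OF Px g]] dunkl_coordmul[OF g]
         dunkl_nsqmul[OF dunkl_P[OF g]])
  then have "dunkl_laplacian Rp \<kappa> (\<lambda>y. nsq y * g y) x =
     4 * (\<Sum>i\<in>UNIV. complex_of_real (x $ i) * dunkl Rp \<kappa> i g x) + 2 * (\<Sum>i\<in>(UNIV::'n set). g x)
     + 2 * (\<Sum>i\<in>UNIV. \<Sum>b\<in>Rp. \<kappa> b * (complex_of_real (b $ i) * complex_of_real (b $ i)) * g (refl b x))
     + nsq x * dunkl_laplacian Rp \<kappa> g x"
    unfolding dunkl_laplacian_def
    by (simp add: sum.distrib sum_distrib_left algebra_simps)
  also have "(\<Sum>i\<in>UNIV. \<Sum>b\<in>Rp. \<kappa> b * (complex_of_real (b $ i) * complex_of_real (b $ i)) * g (refl b x))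
      = (\<Sum>b\<in>Rp. \<kappa> b * 2 * g (refl b x))"
  proof -
    have "(\<Sum>i\<in>UNIV. \<Sum>b\<in>Rp. \<kappa> b * (complex_of_real (b $ i) * complex_of_real (b $ i)) * g (refl b x))
      = (\<Sum>b\<in>Rp. \<Sum>i\<in>UNIV. \<kappa> b * (complex_of_real (b $ i) * complex_of_real (b $ i)) * g (refl b x))"
      by (rule sum.swap)
    also have "\<dots> = (\<Sum>b\<in>Rp. \<kappa> b * (\<Sum>i\<in>UNIV. complex_of_real (b $ i) * complex_of_real (b $ i)) * g (refl b x))"
      by (simp add: sum_distrib_left sum_distrib_right)
    also have "\<dots> = (\<Sum>b\<in>Rp. \<kappa> b * 2 * g (refl b x))"
    proof (rule sum.cong[OF refl])
      fix b assume "b \<in> Rp" then have "b \<bullet> b = 2" using Rp_sub R_norm by blast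
      then show "\<kappa> b * (\<Sum>i\<in>UNIV. complex_of_real (b $ i) * complex_of_real (b $ i)) * g (refl b x) = \<kappa> b * 2 * g (refl b x)"
        by (simp only: sum_sq_inner) simp
    qed
    finally show ?thesis .
  qed
  also note x_dunkl[OF g]
  finally show ?thesis unfolding mu_def
    by (simp add: sum_subtractf sum_distrib_left sum_distrib_right algebra_simps)
qed

lemma lap_add: "f \<in> polys \<Longrightarrow> g \<in> polys \<Longrightarrow> dunkl_laplacian Rp \<kappa> (\<lambda>x. f x + g x) x = dunkl_laplacian Rp \<kappa> f x + dunkl_laplacian Rp \<kappa> g x"
proof -
  assume f: "f \<in> polys" and g: "g \<in> polys"
  have e: "dunkl Rp \<kappa> i (\<lambda>x. f x + g x) = (\<lambda>x. dunkl Rp \<kappa> i f x + dunkl Rp \<kappa> i g x)" for i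
    by (rule ext) (rule dunkl_add[OF f g])
  show ?thesis unfolding dunkl_laplacian_def e
    by (simp add: dunkl_add dunkl_P f g sum.distrib)
qed

lemma lap_cmult: "f \<in> polys \<Longrightarrow> dunkl_laplacian Rp \<kappa> (\<lambda>x. c * f x) x = c * dunkl_laplacian Rp \<kappa> f x"
proof -
  assume f: "f \<in> polys"
  have e: "dunkl Rp \<kappa> i (\<lambda>x. c * f x) = (\<lambda>x. c * dunkl Rp \<kappa> i f x)" for i
    by (rule ext) (rule dunkl_cmult[OF f])
  show ?thesis unfolding dunkl_laplacian_def e
    by (simp add: dunkl_cmult dunkl_P f sum_distrib_left)
qed

lemma dunkl_zero: "dunkl Rp \<kappa> i (\<lambda>x. 0) = (\<lambda>x. 0)"
  by (rule ext) (simp add: dunkl_tv)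

lemma Lop_zero: "Lop (\<lambda>x. 0) x = 0"
  unfolding Lop_def dunkl_laplacian_def by (simp add: dunkl_zero)

definition Mop :: "nat \<Rightarrow> complex poly \<Rightarrow> complex poly" where
  "Mop k p = smult (-4) (pCons 0 (pderiv (pderiv p))) + smult (-(2 * mu + 4 * of_nat k)) (pderiv p)
     + smult 8 (pCons 0 (pderiv p)) + smult (4 * of_nat k + 2 * mu) p + smult (-4) (pCons 0 p)"

context
  fixes k :: nat and H :: "real^('n::{finite,linorder}) \<Rightarrow> real"
  assumes hom: "hom_poly k H" and harm: "\<And>x. dunkl_laplacian Rp \<kappa> (\<lambda>y. complex_of_real (H y)) x = 0"
begin

abbreviation "h \<equiv> (\<lambda>y. complex_of_real (H y))"

lemma hP: "h \<in> polys" by (rule hom_P[OF hom])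

lemma Eop_h: "Eop h x = of_nat k * h x"
  unfolding Eop_def by (rule hom_euler[OF hom])

lemma QhP: "(\<lambda>y. Q p y * h y) \<in> polys" by (intro Pmult Q_P hP)

lemma Eop_Qh: "Eop (\<lambda>y. Q p y * h y) x = (2 * nsq x * poly (pderiv p) (nsq x) + of_nat k * poly p (nsq x)) * h x"
proof -
  have "Eop (\<lambda>y. Q p y * h y) x = Eop (Q p) x * h x + Q p x * Eop h x" by (rule Eop_mult[OF Q_P hP])
  then show ?thesis by (simp add: Eop_Q Eop_h Q_def algebra_simps)
qed

lemma lap_Qh: "dunkl_laplacian Rp \<kappa> (\<lambda>y. Q p y * h y) x =
   (4 * nsq x * poly (pderiv (pderiv p)) (nsq x) + (2 * mu + 4 * of_nat k) * poly (pderiv p) (nsq x)) * h x"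
proof (induction p arbitrary: x)
  case 0 then show ?case unfolding Q_def using harm lap_cmult[OF hP, of 0] by simp
next
  case (pCons a q)
  have e: "(\<lambda>y. Q (pCons a q) y * h y) = (\<lambda>y. a * h y + nsq y * (Q q y * h y))"
    unfolding Q_pCons by (simp add: fun_eq_iff algebra_simps)
  have "dunkl_laplacian Rp \<kappa> (\<lambda>y. Q (pCons a q) y * h y) x
     = a * dunkl_laplacian Rp \<kappa> h x + (nsq x * dunkl_laplacian Rp \<kappa> (\<lambda>y. Q q y * h y) x + 4 * Eop (\<lambda>y. Q q y * h y) x + 2 * mu * (Q q x * h x))"
    unfolding e by (simp add: lap_add P_cmult hP Pmult P_nsq QhP lap_cmult lap_nsq)
  also have "\<dots> = (4 * nsq x * poly (pderiv (pderiv (pCons a q))) (nsq x) + (2 * mu + 4 * of_nat k) * poly (pderiv (pCons a q)) (nsq x)) * h x"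
    unfolding pCons.IH Eop_Qh harm
    by (simp add: Q_def pderiv_pCons pderiv_add algebra_simps)
  finally show ?case .
qed

lemma Lop_Qh: "Lop (\<lambda>y. Q p y * h y) x = poly (Mop k p) (nsq x) * h x"
  unfolding Lop_def lap_Qh Eop_Qh Mop_def
  by (simp add: Q_def pderiv_pCons algebra_simps)

lemma Dplus2_Qh: "D_plus Rp \<kappa> (D_plus Rp \<kappa> (\<lambda>y. scal (Q p y * h y))) = (\<lambda>y. scal (Q (Mop k p) y * h y))"
proof (intro ext)
  fix x A
  have PC: "(\<lambda>y. scal (Q p y * h y) B) \<in> polys" for B
    by (cases "B = {}") (simp_all add: scal_def QhP Pc)
  show "D_plus Rp \<kappa> (D_plus Rp \<kappa> (\<lambda>y. scal (Q p y * h y))) x A = scal (Q (Mop k p) x * h x) A"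
    unfolding Dplus2[OF PC]
    by (cases "A = {}") (simp_all add: scal_def Lop_Qh Lop_zero Q_def[of "Mop k p"])
qed

lemma Dplus_iter: "(D_plus Rp \<kappa> ^^ (2 * t)) (\<lambda>y. scal (h y)) = (\<lambda>y. scal (Q ((Mop k ^^ t) 1) y * h y))"
proof (induction t)
  case 0 then show ?case by (simp add: Q_def)
next
  case (Suc t)
  have "(D_plus Rp \<kappa> ^^ (2 * Suc t)) (\<lambda>y. scal (h y)) = D_plus Rp \<kappa> (D_plus Rp \<kappa> ((D_plus Rp \<kappa> ^^ (2 * t)) (\<lambda>y. scal (h y))))"
    by simp
  also have "\<dots> = (\<lambda>y. scal (Q ((Mop k ^^ Suc t) 1) y * h y))"
    unfolding Suc.IH Dplus2_Qh by simp
  finally show ?case .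
qed

end

end


lemma binom_B: "Suc k * (t choose Suc k) = (t - k) * (t choose k)"
proof (cases t)
  case 0 then show ?thesis by simp
next
  case (Suc s)
  have "Suc k * (Suc s choose Suc k) = Suc s * (s choose k)" by (rule Suc_times_binomial)
  also have "\<dots> = (Suc s - k) * (Suc s choose k)"
    using binomial_absorb_comp[of "Suc s" k] by simp
  finally show ?thesis using Suc by simp
qed

lemma binom_Bc: "of_nat (Suc k) * (of_nat (t choose Suc k) :: complex) = of_nat (t - k) * of_nat (t choose k)"
  using arg_cong[OF binom_B[of k t], of "of_nat :: nat \<Rightarrow> complex"] by (simp only: of_nat_mult)

lemma core:
  fixes a :: complex and t n :: nat
  shows "of_nat (n+2) * (of_nat n + a + 2) * (of_nat (t choose (n+2)) * pochhammer (of_nat (n+2) + a + 1) (t - (n+2)))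
   + (2 * of_nat n + a + 3) * (of_nat (t choose (n+1)) * pochhammer (of_nat (n+1) + a + 1) (t - (n+1)))
   + of_nat (t choose n) * pochhammer (of_nat n + a + 1) (t - n)
   = of_nat (Suc t choose (n+1)) * pochhammer (of_nat (n+1) + a + 1) (Suc t - (n+1))"
proof (cases "t \<le> n")
  case True
  then have z1: "t choose (n+1) = 0" "t choose (n+2) = 0" by simp_all
  show ?thesis
  proof (cases "t = n")
    case True then show ?thesis by (simp add: binomial_eq_0)
  next
    case False
    then have "t choose n = 0" "Suc t choose (n+1) = 0" using \<open>t \<le> n\<close> by simp_all
    then show ?thesis using \<open>t \<le> n\<close> by (simp add: binomial_eq_0)
  qed
next
  case False
  then obtain m where t: "t = n + 1 + m" 
  proof -
    have "t = n + 1 + (t - n - 1)" using False by simp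
    then show ?thesis using that by blast
  qed
  define C0 where "C0 = (of_nat (t choose n) :: complex)"
  define C1 where "C1 = (of_nat (t choose (n+1)) :: complex)"
  define C2 where "C2 = (of_nat (t choose (n+2)) :: complex)"
  define P where "P = pochhammer (of_nat n + a + 2) m"
  have B1: "of_nat (n+2) * C2 = of_nat m * C1"
    using binom_Bc[of "n+1" t] unfolding C1_def C2_def t by simp
  have B0: "of_nat (n+1) * C1 = of_nat (m+1) * C0"
    using binom_Bc[of "n" t] unfolding C1_def C0_def t by simp
  have p2: "(of_nat n + a + 2) * (C2 * pochhammer (of_nat (n+2) + a + 1) (t - (n+2))) = C2 * P"
  proof (cases m)
    case 0 then have "C2 = 0" unfolding C2_def t by (simp add: binomial_eq_0)
    then show ?thesis by simp
  next
    case (Suc m')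
    have "t - (n+2) = m'" using t Suc by simp
    moreover have "pochhammer (of_nat n + a + 2) (Suc m') = (of_nat n + a + 2) * pochhammer (of_nat n + a + 2 + 1) m'"
      by (rule pochhammer_rec)
    ultimately show ?thesis unfolding P_def Suc by (simp add: add_ac)
  qed
  have p1: "pochhammer (of_nat (n+1) + a + 1) (t - (n+1)) = P"
    unfolding P_def t by (simp add: add_ac)
  have p0: "pochhammer (of_nat n + a + 1) (t - n) = (of_nat n + a + 1) * P"
  proof -
    have "t - n = Suc m" using t by simp
    then show ?thesis unfolding P_def using pochhammer_rec[of "of_nat n + a + 1" m] by (simp add: add_ac)
  qed
  have pR: "pochhammer (of_nat (n+1) + a + 1) (Suc t - (n+1)) = P * (of_nat n + a + 2 + of_nat m)"
  proof -
    have "Suc t - (n+1) = Suc m" using t by simp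
    then show ?thesis unfolding P_def using pochhammer_Suc[of "of_nat n + a + 2" m] by (simp add: add_ac)
  qed
  have cR: "of_nat (Suc t choose (n+1)) = C0 + C1"
    unfolding C0_def C1_def by simp
  have "of_nat (n+2) * (of_nat n + a + 2) * (C2 * pochhammer (of_nat (n+2) + a + 1) (t - (n+2)))
     = of_nat m * C1 * P"
  proof -
    have "of_nat (n+2) * (of_nat n + a + 2) * (C2 * pochhammer (of_nat (n+2) + a + 1) (t - (n+2)))
       = of_nat (n+2) * ((of_nat n + a + 2) * (C2 * pochhammer (of_nat (n+2) + a + 1) (t - (n+2))))"
      by (simp only: mult.assoc)
    also have "\<dots> = of_nat (n+2) * (C2 * P)" by (simp only: p2)
    also have "\<dots> = (of_nat (n+2) * C2) * P" by (simp only: mult.assoc)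
    also have "\<dots> = of_nat m * C1 * P" by (simp only: B1)
    finally show ?thesis .
  qed
  then show ?thesis
    unfolding C0_def[symmetric] C1_def[symmetric] C2_def[symmetric] p1 p0 pR cR
  proof -
    assume h: "of_nat (n+2) * (of_nat n + a + 2) * (C2 * pochhammer (of_nat (n+2) + a + 1) (t - (n+2))) = of_nat m * C1 * P"
    have "of_nat m * C1 * P + (2 * of_nat n + a + 3) * (C1 * P) + C0 * ((of_nat n + a + 1) * P)
        = (C0 + C1) * (P * (of_nat n + a + 2 + of_nat m))
          + P * (of_nat (n+1) * C1 - of_nat (m+1) * C0)"
      unfolding of_nat_add of_nat_1 by algebra
    also have "\<dots> = (C0 + C1) * (P * (of_nat n + a + 2 + of_nat m))" using B0 by simp
    finally show "of_nat (n+2) * (of_nat n + a + 2) * (C2 * pochhammer (of_nat (n+2) + a + 1) (t - (n+2)))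
      + (2 * of_nat n + a + 3) * (C1 * P) + C0 * ((of_nat n + a + 1) * P) = (C0 + C1) * (P * (of_nat n + a + 2 + of_nat m))"
      using h by simp
  qed
qed

lemma core0:
  fixes a :: complex
  shows "(a + 1) * (of_nat (t choose 1) * pochhammer (1 + a + 1) (t - 1)) + (a + 1) * pochhammer (0 + a + 1) t
     = pochhammer (0 + a + 1) (Suc t)"
proof (cases t)
  case 0 then show ?thesis by simp
next
  case (Suc m)
  have e1: "(a + 1) * pochhammer (a + 2) m = pochhammer (a + 1) (Suc m)"
    using pochhammer_rec[of "a + 1" m] by (simp add: add_ac)
  have e2: "pochhammer (a + 1) (Suc (Suc m)) = pochhammer (a + 1) (Suc m) * (a + 1 + of_nat (Suc m))"
    by (rule pochhammer_Suc)
  have "(a + 1) * (of_nat (Suc m) * pochhammer (a + 2) m) = of_nat (Suc m) * pochhammer (a + 1) (Suc m)"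
    using e1 by (metis mult.left_commute)
  then show ?thesis unfolding Suc using e2
    by (simp add: add_ac distrib_left distrib_right mult.commute)
qed

definition lc :: "complex \<Rightarrow> nat \<Rightarrow> nat \<Rightarrow> complex" where
  "lc a t j = 4 ^ t * (-1) ^ j * of_nat (t choose j) * pochhammer (of_nat j + a + 1) (t - j)"

definition lagp :: "complex \<Rightarrow> nat \<Rightarrow> complex poly" where
  "lagp a t = (\<Sum>j\<le>t. monom (lc a t j) j)"

lemma coeff_lagp: "coeff (lagp a t) j = lc a t j"
proof -
  have "coeff (lagp a t) j = (\<Sum>i\<le>t. if i = j then lc a t i else 0)"
    unfolding lagp_def by (simp add: coeff_sum coeff_monom)
  also have "\<dots> = (if j \<le> t then lc a t j else 0)" by (simp add: sum.delta)
  also have "\<dots> = lc a t j" by (simp add: lc_def binomial_eq_0)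
  finally show ?thesis .
qed

definition Mp :: "complex \<Rightarrow> complex poly \<Rightarrow> complex poly" where
  "Mp a p = smult (-4) (pCons 0 (pderiv (pderiv p))) + smult (-4 * (a + 1)) (pderiv p)
     + smult 8 (pCons 0 (pderiv p)) + smult (4 * (a + 1)) p + smult (-4) (pCons 0 p)"

lemma coeff_Mp0: "coeff (Mp a p) 0 = -4 * (a + 1) * coeff p 1 + 4 * (a + 1) * coeff p 0"
  unfolding Mp_def by (simp add: coeff_pderiv)

lemma coeff_MpS: "coeff (Mp a p) (Suc n) =
   -4 * (of_nat (Suc n) * of_nat (Suc (Suc n))) * coeff p (Suc (Suc n))
   - 4 * (a + 1) * of_nat (Suc (Suc n)) * coeff p (Suc (Suc n))
   + 8 * of_nat (Suc n) * coeff p (Suc n) + 4 * (a + 1) * coeff p (Suc n) - 4 * coeff p n"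
  unfolding Mp_def by (simp add: coeff_pderiv algebra_simps)

lemma Mp_lagp: "Mp a (lagp a t) = lagp a (Suc t)"
proof (rule poly_eqI)
  fix j show "coeff (Mp a (lagp a t)) j = coeff (lagp a (Suc t)) j"
  proof (cases j)
    case 0
    have "coeff (Mp a (lagp a t)) 0 = 4 ^ Suc t * ((a + 1) * (of_nat (t choose 1) * pochhammer (1 + a + 1) (t - 1)) + (a + 1) * pochhammer (0 + a + 1) t)"
      unfolding coeff_Mp0 coeff_lagp lc_def by (simp add: algebra_simps)
    also have "\<dots> = lc a (Suc t) 0" unfolding core0 lc_def by simp
    finally show ?thesis using 0 by (simp add: coeff_lagp)
  next
    case (Suc n)
    have "coeff (Mp a (lagp a t)) (Suc n) = - (4 ^ Suc t * (-1) ^ n) *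
      (of_nat (n+2) * (of_nat n + a + 2) * (of_nat (t choose (n+2)) * pochhammer (of_nat (n+2) + a + 1) (t - (n+2)))
       + (2 * of_nat n + a + 3) * (of_nat (t choose (n+1)) * pochhammer (of_nat (n+1) + a + 1) (t - (n+1)))
       + of_nat (t choose n) * pochhammer (of_nat n + a + 1) (t - n))"
      unfolding coeff_MpS coeff_lagp lc_def
      by (simp add: algebra_simps numeral_eq_Suc)
    also have "\<dots> = lc a (Suc t) (Suc n)" unfolding core lc_def by (simp add: algebra_simps)
    finally show ?thesis using Suc by (simp add: coeff_lagp)
  qed
qed

lemma lagp0: "lagp a 0 = 1"
  unfolding lagp_def lc_def by (simp add: monom_0 one_pCons)

lemma Mp_iter: "(Mp a ^^ t) 1 = lagp a t"
  by (induction t) (simp_all add: lagp0 Mp_lagp)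

lemma poly_lagp: "poly (lagp a t) z = 2 ^ (2 * t) * fact t * laguerre t a z"
proof -
  have "poly (lagp a t) z = (\<Sum>j\<le>t. lc a t j * z ^ j)"
    unfolding lagp_def by (simp add: poly_sum poly_monom)
  also have "\<dots> = (\<Sum>j\<le>t. 2 ^ (2 * t) * fact t * (pochhammer (of_nat j + a + 1) (t - j) / (fact j * fact (t - j)) * (- z) ^ j))"
  proof (rule sum.cong[OF refl])
    fix j assume "j \<in> {..t}" then have jt: "j \<le> t" by simp
    have "(of_nat (t choose j) :: complex) = fact t / (fact j * fact (t - j))" by (rule binomial_fact[OF jt])
    moreover have "(4::complex) ^ t = 2 ^ (2 * t)" by (simp add: power_mult)
    ultimately show "lc a t j * z ^ j = 2 ^ (2 * t) * fact t * (pochhammer (of_nat j + a + 1) (t - j) / (fact j * fact (t - j)) * (- z) ^ j)"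
      unfolding lc_def by (simp add: power_minus' field_simps)
  qed
  also have "\<dots> = 2 ^ (2 * t) * fact t * laguerre t a z"
    unfolding laguerre_def by (simp add: sum_distrib_left)
  finally show ?thesis .
qed


context dsetup begin

lemma Mop_Mp: "Mop k p = Mp (mu / 2 + of_nat k - 1) p"
proof -
  have "2 * mu + 4 * of_nat k = 4 * (mu / 2 + of_nat k - 1 + 1)" by (simp add: algebra_simps)
  moreover have "4 * of_nat k + 2 * mu = 4 * (mu / 2 + of_nat k - 1 + 1)" by (simp add: algebra_simps)
  ultimately show ?thesis unfolding Mop_def Mp_def by (simp only: minus_mult_left)
qed

end

theorem theorem3p4:
  fixes R Rp :: "(real^('n::{finite,linorder})) set"
    and \<kappa> :: "real^('n::{finite,linorder}) \<Rightarrow> complex"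
    and k t :: nat
    and H :: "real^('n::{finite,linorder}) \<Rightarrow> real"
  assumes "normalized_root_system R"
    and "positive_subsystem R Rp"
    and "G_invariant R \<kappa>"
    and "t > 0"
    and "dunkl_harmonic Rp \<kappa> k H"
  shows "let \<gamma> = (\<Sum>\<alpha>\<in>Rp. \<kappa> \<alpha>);
             \<mu> = of_nat CARD('n) + 2 * \<gamma>
         in \<forall>x. (D_plus Rp \<kappa> ^^ (2 * t)) (\<lambda>y. scal (complex_of_real (H y))) x
               = scal (2 ^ (2 * t) * fact t
                       * laguerre t (\<mu> / 2 + of_nat k - 1) (complex_of_real ((norm x)\<^sup>2))
                       * complex_of_real (H x))"
proof -
  interpret dsetup R Rp \<kappa> using assms(1-3) by unfold_locales
  have hom: "hom_poly k H" and harm: "\<And>x. dunkl_laplacian Rp \<kappa> (\<lambda>y. complex_of_real (H y)) x = 0"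
    using assms(5) unfolding dunkl_harmonic_def by blast+
  have it: "(D_plus Rp \<kappa> ^^ (2 * t)) (\<lambda>y. scal (complex_of_real (H y))) =
     (\<lambda>y. scal (Q ((Mop k ^^ t) 1) y * complex_of_real (H y)))"
    by (rule Dplus_iter[OF hom harm])
  have m: "Mop k = Mp (mu / 2 + of_nat k - 1)" by (rule ext) (rule Mop_Mp)
  show ?thesis
    unfolding Let_def
  proof (intro allI)
    fix x
    show "(D_plus Rp \<kappa> ^^ (2 * t)) (\<lambda>y. scal (complex_of_real (H y))) x =
      scal (2 ^ (2 * t) * fact t * laguerre t ((of_nat CARD('n) + 2 * (\<Sum>\<alpha>\<in>Rp. \<kappa> \<alpha>)) / 2 + of_nat k - 1)
        (complex_of_real ((norm x)\<^sup>2)) * complex_of_real (H x))"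
      unfolding it m Mp_iter Q_def poly_lagp nsq_def mu_def by simp
  qed
qed


end
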